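(* Let $\mathcal{K}$ be a $2$-category with pseudolimits of arrows and powers by the free-living isomorphism, and let $f\colon A\to B$ be a morphism. Then: (1) $f$ is a representable isofibration if and only if $w_f\colon A^{\mathbb{I}}\to L_f$ is a representable isofibration; (2) $f$ is a normal isofibration if and only if $w_f$ is a normal isofibration. In either case, $w_f$ is then a retract equivalence.
   Context: $\mathbb{I}$ is the category with two objects and an isomorphism between them; $A^{\mathbb{I}}$ is the power of $A$ by $\mathbb{I}$ (equivalently the pseudolimit of $1_A$), with projections $\mathrm{dom},\mathrm{cod}\colon A^{\mathbb{I}}\to A$. The pseudolimit of $f$ is an object $L_f$ with $u_f\colon L_f\to A$, $v_f\colon L_f\to B$ and invertible $\lambda_f\colon v_f\cong fu_f$, universal among such data; it may be constructed as the pullback of $\mathrm{cod}\colon B^{\mathbb{I}}\to B$ along $f$. $w_f\colon A^{\mathbb{I}}\to L_f$ is the induced morphism with $u_fw_f=\mathrm{cod}$ and whose composite with the projection $L_f\to B^{\mathbb{I}}$ is $f^{\mathbb{I}}$ (it is the Leibniz power of $f$ by the inclusion $1\to\mathbb{I}$). An equivalence $f$ is a retract equivalence if it has a section (equivalently, it has equivalence data with counit an identity). A morphism $f\colon A\to B$ is a representable isofibration if for every object $X$, given $g\colon X\to A$, $h\colon X\to B$ and invertible $\alpha\colon fg\cong h$, there exist $h'\colon X\to A$ and invertible $\alpha'\colon g\cong h'$ with $f\alpha'=\alpha$. A cleavage is a choice of such $(\alpha',h')$ for every $(g,\alpha,h)$, natural in $X$; it is normal if $\alpha'$ is an identity whenever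 $\alpha$ is. A normal isofibration is a representable isofibration admitting a normal cleavage. *)

theory Defs
  imports Main
begin

text \<open>Ob: objects; Ar: 1-cells; sr/tg: source and target object of a 1-cell;
  Ce: 2-cells; d2/c2: domain and codomain 1-cell of a 2-cell;
  cmp g f: composite g after f of 1-cells; i1 A: identity 1-cell;
  vc \<beta> \<alpha>: vertical composite (\<beta> after \<alpha>); hc \<beta> \<alpha>: horizontal composite;
  i2 f: identity 2-cell on f.\<close>

record ('o, 'm, 'c) twocat =
  Ob  :: "'o set"
  Ar  :: "'m set"
  sr  :: "'m \<Rightarrow> 'o"
  tg  :: "'m \<Rightarrow> 'o"
  Ce  :: "'c set"
  d2  :: "'c \<Rightarrow> 'm"
  c2  :: "'c \<Rightarrow> 'm"
  cmp :: "'m \<Rightarrow> 'm \<Rightarrow> 'm"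
  i1  :: "'o \<Rightarrow> 'm"
  vc  :: "'c \<Rightarrow> 'c \<Rightarrow> 'c"
  hc  :: "'c \<Rightarrow> 'c \<Rightarrow> 'c"
  i2  :: "'m \<Rightarrow> 'c"

definition hom :: "('o,'m,'c,'x) twocat_scheme \<Rightarrow> 'o \<Rightarrow> 'o \<Rightarrow> 'm set" where
  "hom C X Y = {m \<in> Ar C. sr C m = X \<and> tg C m = Y}"

definition cells :: "('o,'m,'c,'x) twocat_scheme \<Rightarrow> 'm \<Rightarrow> 'm \<Rightarrow> 'c set" where
  "cells C f g = {\<alpha> \<in> Ce C. d2 C \<alpha> = f \<and> c2 C \<alpha> = g}"

definition two_category :: "('o,'m,'c,'x) twocat_scheme \<Rightarrow> bool" where
  "two_category C \<longleftrightarrow>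
    \<comment> \<open>underlying 1-category\<close>
    (\<forall>f\<in>Ar C. sr C f \<in> Ob C \<and> tg C f \<in> Ob C) \<and>
    (\<forall>A\<in>Ob C. i1 C A \<in> hom C A A) \<and>
    (\<forall>f\<in>Ar C. \<forall>g\<in>Ar C. sr C g = tg C f \<longrightarrow> cmp C g f \<in> hom C (sr C f) (tg C g)) \<and>
    (\<forall>f\<in>Ar C. \<forall>g\<in>Ar C. \<forall>h\<in>Ar C. sr C g = tg C f \<longrightarrow> sr C h = tg C g \<longrightarrow>
        cmp C h (cmp C g f) = cmp C (cmp C h g) f) \<and>
    (\<forall>f\<in>Ar C. cmp C (i1 C (tg C f)) f = f \<and> cmp C f (i1 C (sr C f)) = f) \<and>
    \<comment> \<open>2-cells go between parallel 1-cells; vertical structure\<close>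
    (\<forall>\<alpha>\<in>Ce C. d2 C \<alpha> \<in> Ar C \<and> c2 C \<alpha> \<in> Ar C \<and>
        sr C (d2 C \<alpha>) = sr C (c2 C \<alpha>) \<and> tg C (d2 C \<alpha>) = tg C (c2 C \<alpha>)) \<and>
    (\<forall>f\<in>Ar C. i2 C f \<in> cells C f f) \<and>
    (\<forall>\<alpha>\<in>Ce C. \<forall>\<beta>\<in>Ce C. d2 C \<beta> = c2 C \<alpha> \<longrightarrow> vc C \<beta> \<alpha> \<in> cells C (d2 C \<alpha>) (c2 C \<beta>)) \<and>
    (\<forall>\<alpha>\<in>Ce C. \<forall>\<beta>\<in>Ce C. \<forall>\<gamma>\<in>Ce C. d2 C \<beta> = c2 C \<alpha> \<longrightarrow> d2 C \<gamma> = c2 C \<beta> \<longrightarrow>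
        vc C \<gamma> (vc C \<beta> \<alpha>) = vc C (vc C \<gamma> \<beta>) \<alpha>) \<and>
    (\<forall>\<alpha>\<in>Ce C. vc C (i2 C (c2 C \<alpha>)) \<alpha> = \<alpha> \<and> vc C \<alpha> (i2 C (d2 C \<alpha>)) = \<alpha>) \<and>
    \<comment> \<open>horizontal composition, a functor on hom-categories\<close>
    (\<forall>\<alpha>\<in>Ce C. \<forall>\<beta>\<in>Ce C. sr C (d2 C \<beta>) = tg C (d2 C \<alpha>) \<longrightarrow>
        hc C \<beta> \<alpha> \<in> cells C (cmp C (d2 C \<beta>) (d2 C \<alpha>)) (cmp C (c2 C \<beta>) (c2 C \<alpha>))) \<and>
    (\<forall>\<alpha>\<in>Ce C. \<forall>\<beta>\<in>Ce C. \<forall>\<gamma>\<in>Ce C. sr C (d2 C \<beta>) = tg C (d2 C \<alpha>) \<longrightarrow>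
        sr C (d2 C \<gamma>) = tg C (d2 C \<beta>) \<longrightarrow>
        hc C \<gamma> (hc C \<beta> \<alpha>) = hc C (hc C \<gamma> \<beta>) \<alpha>) \<and>
    (\<forall>\<alpha>\<in>Ce C. hc C (i2 C (i1 C (tg C (d2 C \<alpha>)))) \<alpha> = \<alpha> \<and>
               hc C \<alpha> (i2 C (i1 C (sr C (d2 C \<alpha>)))) = \<alpha>) \<and>
    (\<forall>f\<in>Ar C. \<forall>g\<in>Ar C. sr C g = tg C f \<longrightarrow> hc C (i2 C g) (i2 C f) = i2 C (cmp C g f)) \<and>
    (\<forall>\<alpha>\<in>Ce C. \<forall>\<alpha>'\<in>Ce C. \<forall>\<beta>\<in>Ce C. \<forall>\<beta>'\<in>Ce C.
        d2 C \<alpha>' = c2 C \<alpha> \<longrightarrow> d2 C \<beta>' = c2 C \<beta> \<longrightarrow> sr C (d2 C \<beta>) = tg C (d2 C \<alpha>) \<longrightarrow>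
        hc C (vc C \<beta>' \<beta>) (vc C \<alpha>' \<alpha>) = vc C (hc C \<beta>' \<alpha>') (hc C \<beta> \<alpha>))"

definition lw :: "('o,'m,'c,'x) twocat_scheme \<Rightarrow> 'm \<Rightarrow> 'c \<Rightarrow> 'c" where
  "lw C f \<alpha> = hc C (i2 C f) \<alpha>"

definition rw :: "('o,'m,'c,'x) twocat_scheme \<Rightarrow> 'c \<Rightarrow> 'm \<Rightarrow> 'c" where
  "rw C \<alpha> f = hc C \<alpha> (i2 C f)"

definition iso2 :: "('o,'m,'c,'x) twocat_scheme \<Rightarrow> 'c \<Rightarrow> bool" where
  "iso2 C \<alpha> \<longleftrightarrow> \<alpha> \<in> Ce C \<and>
     (\<exists>\<beta> \<in> cells C (c2 C \<alpha>) (d2 C \<alpha>).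
        vc C \<beta> \<alpha> = i2 C (d2 C \<alpha>) \<and> vc C \<alpha> \<beta> = i2 C (c2 C \<alpha>))"

text \<open>(L, u, v, lam) is a pseudolimit of f : A \<rightarrow> B, with lam : v \<cong> f u invertible;
  the universal property is the (strict) isomorphism of categories between
  K(X, L) and the category of pseudo-cones over f with vertex X.\<close>

definition pseudolimit ::
  "('o,'m,'c,'x) twocat_scheme \<Rightarrow> 'm \<Rightarrow> 'o \<Rightarrow> 'm \<Rightarrow> 'm \<Rightarrow> 'c \<Rightarrow> bool" where
  "pseudolimit C f L u v lam \<longleftrightarrow>
     f \<in> Ar C \<and> L \<in> Ob C \<and> u \<in> hom C L (sr C f) \<and> v \<in> hom C L (tg C f) \<and>
     lam \<in> cells C v (cmp C f u) \<and> iso2 C lam \<and>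
     (\<forall>X\<in>Ob C. \<forall>a\<in>hom C X (sr C f). \<forall>b\<in>hom C X (tg C f).
        \<forall>\<beta>\<in>cells C b (cmp C f a). iso2 C \<beta> \<longrightarrow>
          (\<exists>!m. m \<in> hom C X L \<and> cmp C u m = a \<and> cmp C v m = b \<and> rw C lam m = \<beta>)) \<and>
     (\<forall>X\<in>Ob C. \<forall>m\<in>hom C X L. \<forall>m'\<in>hom C X L.
        \<forall>\<theta>u\<in>cells C (cmp C u m) (cmp C u m'). \<forall>\<theta>v\<in>cells C (cmp C v m) (cmp C v m').
          vc C (lw C f \<theta>u) (rw C lam m) = vc C (rw C lam m') \<theta>v \<longrightarrow>
          (\<exists>!\<theta>. \<theta> \<in> cells C m m' \<and> lw C u \<theta> = \<theta>u \<and> lw C v \<theta> = \<theta>v))"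

text \<open>(P, d, c, \<iota>) is the power of A by the free-living isomorphism \<I>
  (equivalently the pseudolimit of the identity of A), with \<iota> : d \<cong> c.\<close>

definition iso_power ::
  "('o,'m,'c,'x) twocat_scheme \<Rightarrow> 'o \<Rightarrow> 'o \<Rightarrow> 'm \<Rightarrow> 'm \<Rightarrow> 'c \<Rightarrow> bool" where
  "iso_power C A P d c \<iota> \<longleftrightarrow>
     A \<in> Ob C \<and> P \<in> Ob C \<and> d \<in> hom C P A \<and> c \<in> hom C P A \<and>
     \<iota> \<in> cells C d c \<and> iso2 C \<iota> \<and>
     (\<forall>X\<in>Ob C. \<forall>a\<in>hom C X A. \<forall>b\<in>hom C X A.
        \<forall>\<alpha>\<in>cells C a b. iso2 C \<alpha> \<longrightarrow>
          (\<exists>!m. m \<in> hom C X P \<and> cmp C d m = a \<and> cmp C c m = b \<and> rw C \<iota> m = \<alpha>)) \<and>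
     (\<forall>X\<in>Ob C. \<forall>m\<in>hom C X P. \<forall>m'\<in>hom C X P.
        \<forall>\<sigma>d\<in>cells C (cmp C d m) (cmp C d m'). \<forall>\<sigma>c\<in>cells C (cmp C c m) (cmp C c m').
          vc C (rw C \<iota> m') \<sigma>d = vc C \<sigma>c (rw C \<iota> m) \<longrightarrow>
          (\<exists>!\<sigma>. \<sigma> \<in> cells C m m' \<and> lw C d \<sigma> = \<sigma>d \<and> lw C c \<sigma> = \<sigma>c))"

definition has_pseudolimits_of_arrows :: "('o,'m,'c,'x) twocat_scheme \<Rightarrow> bool" where
  "has_pseudolimits_of_arrows C \<longleftrightarrow>
     (\<forall>f\<in>Ar C. \<exists>L u v lam. pseudolimit C f L u v lam)"

definition has_iso_powers :: "('o,'m,'c,'x) twocat_scheme \<Rightarrow> bool" where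
  "has_iso_powers C \<longleftrightarrow> (\<forall>A\<in>Ob C. \<exists>P d c \<iota>. iso_power C A P d c \<iota>)"

definition rep_isofib :: "('o,'m,'c,'x) twocat_scheme \<Rightarrow> 'm \<Rightarrow> bool" where
  "rep_isofib C f \<longleftrightarrow> f \<in> Ar C \<and>
     (\<forall>X\<in>Ob C. \<forall>g\<in>hom C X (sr C f). \<forall>h\<in>hom C X (tg C f).
        \<forall>\<alpha>\<in>cells C (cmp C f g) h. iso2 C \<alpha> \<longrightarrow>
          (\<exists>h'\<in>hom C X (sr C f). \<exists>\<alpha>'\<in>cells C g h'. iso2 C \<alpha>' \<and> lw C f \<alpha>' = \<alpha>))"

text \<open>A cleavage for f: a choice cl g \<alpha> = \<alpha>' (with h' = codomain of \<alpha>') for every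
  lifting problem (g, \<alpha>, h), natural in X (stable under precomposition).\<close>

definition cleavage :: "('o,'m,'c,'x) twocat_scheme \<Rightarrow> 'm \<Rightarrow> ('m \<Rightarrow> 'c \<Rightarrow> 'c) \<Rightarrow> bool" where
  "cleavage C f cl \<longleftrightarrow> f \<in> Ar C \<and>
     (\<forall>X\<in>Ob C. \<forall>g\<in>hom C X (sr C f). \<forall>h\<in>hom C X (tg C f).
        \<forall>\<alpha>\<in>cells C (cmp C f g) h. iso2 C \<alpha> \<longrightarrow>
          c2 C (cl g \<alpha>) \<in> hom C X (sr C f) \<and> cl g \<alpha> \<in> cells C g (c2 C (cl g \<alpha>)) \<and>
          iso2 C (cl g \<alpha>) \<and> lw C f (cl g \<alpha>) = \<alpha> \<and>
          (\<forall>Y\<in>Ob C. \<forall>k\<in>hom C Y X. cl (cmp C g k) (rw C \<alpha> k) = rw C (cl g \<alpha>) k))"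

definition normal_cleavage :: "('o,'m,'c,'x) twocat_scheme \<Rightarrow> 'm \<Rightarrow> ('m \<Rightarrow> 'c \<Rightarrow> 'c) \<Rightarrow> bool" where
  "normal_cleavage C f cl \<longleftrightarrow> cleavage C f cl \<and>
     (\<forall>X\<in>Ob C. \<forall>g\<in>hom C X (sr C f). cl g (i2 C (cmp C f g)) = i2 C g)"

definition normal_isofib :: "('o,'m,'c,'x) twocat_scheme \<Rightarrow> 'm \<Rightarrow> bool" where
  "normal_isofib C f \<longleftrightarrow> rep_isofib C f \<and> (\<exists>cl. normal_cleavage C f cl)"

definition equivalence :: "('o,'m,'c,'x) twocat_scheme \<Rightarrow> 'm \<Rightarrow> bool" where
  "equivalence C f \<longleftrightarrow> f \<in> Ar C \<and>
     (\<exists>g\<in>hom C (tg C f) (sr C f).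
        (\<exists>\<eta>\<in>cells C (i1 C (sr C f)) (cmp C g f). iso2 C \<eta>) \<and>
        (\<exists>\<epsilon>\<in>cells C (cmp C f g) (i1 C (tg C f)). iso2 C \<epsilon>))"

definition retract_equivalence :: "('o,'m,'c,'x) twocat_scheme \<Rightarrow> 'm \<Rightarrow> bool" where
  "retract_equivalence C f \<longleftrightarrow> equivalence C f \<and>
     (\<exists>s\<in>hom C (tg C f) (sr C f). cmp C f s = i1 C (tg C f))"

end

theory Submission
  imports Defs
begin

definition inv2 :: "('o,'m,'c,'x) twocat_scheme \<Rightarrow> 'c \<Rightarrow> 'c" where
  "inv2 C \<alpha> = (SOME \<beta>. \<beta> \<in> cells C (c2 C \<alpha>) (d2 C \<alpha>) \<and>
        vc C \<beta> \<alpha> = i2 C (d2 C \<alpha>) \<and> vc C \<alpha> \<beta> = i2 C (c2 C \<alpha>))"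

locale tc =
  fixes C :: "('o,'m,'c,'x) twocat_scheme"
  assumes tc: "two_category C"
begin

lemma ax1: "(\<forall>f\<in>Ar C. sr C f \<in> Ob C \<and> tg C f \<in> Ob C)"
  using tc unfolding two_category_def by (elim conjE) assumption

lemma ax2: "(\<forall>A\<in>Ob C. i1 C A \<in> hom C A A)"
  using tc unfolding two_category_def by (elim conjE) assumption

lemma ax3: "(\<forall>f\<in>Ar C. \<forall>g\<in>Ar C. sr C g = tg C f \<longrightarrow> cmp C g f \<in> hom C (sr C f) (tg C g))"
  using tc unfolding two_category_def by (elim conjE) assumption

lemma ax4: "(\<forall>f\<in>Ar C. \<forall>g\<in>Ar C. \<forall>h\<in>Ar C. sr C g = tg C f \<longrightarrow> sr C h = tg C g \<longrightarrow>
        cmp C h (cmp C g f) = cmp C (cmp C h g) f)"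
  using tc unfolding two_category_def by (elim conjE) assumption

lemma ax5: "(\<forall>f\<in>Ar C. cmp C (i1 C (tg C f)) f = f \<and> cmp C f (i1 C (sr C f)) = f)"
  using tc unfolding two_category_def by (elim conjE) assumption

lemma ax6: "(\<forall>\<alpha>\<in>Ce C. d2 C \<alpha> \<in> Ar C \<and> c2 C \<alpha> \<in> Ar C \<and>
        sr C (d2 C \<alpha>) = sr C (c2 C \<alpha>) \<and> tg C (d2 C \<alpha>) = tg C (c2 C \<alpha>))"
  using tc unfolding two_category_def by (elim conjE) assumption

lemma ax7: "(\<forall>f\<in>Ar C. i2 C f \<in> cells C f f)"
  using tc unfolding two_category_def by (elim conjE) assumption

lemma ax8: "(\<forall>\<alpha>\<in>Ce C. \<forall>\<beta>\<in>Ce C. d2 C \<beta> = c2 C \<alpha> \<longrightarrow> vc C \<beta> \<alpha> \<in> cells C (d2 C \<alpha>) (c2 C \<beta>))"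
  using tc unfolding two_category_def by (elim conjE) assumption

lemma ax9: "(\<forall>\<alpha>\<in>Ce C. \<forall>\<beta>\<in>Ce C. \<forall>\<gamma>\<in>Ce C. d2 C \<beta> = c2 C \<alpha> \<longrightarrow> d2 C \<gamma> = c2 C \<beta> \<longrightarrow>
        vc C \<gamma> (vc C \<beta> \<alpha>) = vc C (vc C \<gamma> \<beta>) \<alpha>)"
  using tc unfolding two_category_def by (elim conjE) assumption

lemma ax10: "(\<forall>\<alpha>\<in>Ce C. vc C (i2 C (c2 C \<alpha>)) \<alpha> = \<alpha> \<and> vc C \<alpha> (i2 C (d2 C \<alpha>)) = \<alpha>)"
  using tc unfolding two_category_def by (elim conjE) assumption

lemma ax11: "(\<forall>\<alpha>\<in>Ce C. \<forall>\<beta>\<in>Ce C. sr C (d2 C \<beta>) = tg C (d2 C \<alpha>) \<longrightarrow>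
        hc C \<beta> \<alpha> \<in> cells C (cmp C (d2 C \<beta>) (d2 C \<alpha>)) (cmp C (c2 C \<beta>) (c2 C \<alpha>)))"
  using tc unfolding two_category_def by (elim conjE) assumption

lemma ax12: "(\<forall>\<alpha>\<in>Ce C. \<forall>\<beta>\<in>Ce C. \<forall>\<gamma>\<in>Ce C. sr C (d2 C \<beta>) = tg C (d2 C \<alpha>) \<longrightarrow>
        sr C (d2 C \<gamma>) = tg C (d2 C \<beta>) \<longrightarrow>
        hc C \<gamma> (hc C \<beta> \<alpha>) = hc C (hc C \<gamma> \<beta>) \<alpha>)"
  using tc unfolding two_category_def by (elim conjE) assumption

lemma ax13: "(\<forall>\<alpha>\<in>Ce C. hc C (i2 C (i1 C (tg C (d2 C \<alpha>)))) \<alpha> = \<alpha> \<and>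
               hc C \<alpha> (i2 C (i1 C (sr C (d2 C \<alpha>)))) = \<alpha>)"
  using tc unfolding two_category_def by (elim conjE) assumption

lemma ax14: "(\<forall>f\<in>Ar C. \<forall>g\<in>Ar C. sr C g = tg C f \<longrightarrow> hc C (i2 C g) (i2 C f) = i2 C (cmp C g f))"
  using tc unfolding two_category_def by (elim conjE) assumption

lemma ax15: "(\<forall>\<alpha>\<in>Ce C. \<forall>\<alpha>'\<in>Ce C. \<forall>\<beta>\<in>Ce C. \<forall>\<beta>'\<in>Ce C.
        d2 C \<alpha>' = c2 C \<alpha> \<longrightarrow> d2 C \<beta>' = c2 C \<beta> \<longrightarrow> sr C (d2 C \<beta>) = tg C (d2 C \<alpha>) \<longrightarrow>
        hc C (vc C \<beta>' \<beta>) (vc C \<alpha>' \<alpha>) = vc C (hc C \<beta>' \<alpha>') (hc C \<beta> \<alpha>))"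
  using tc unfolding two_category_def by (elim conjE) assumption

lemma hom_iff: "m \<in> hom C X Y \<longleftrightarrow> m \<in> Ar C \<and> sr C m = X \<and> tg C m = Y"
  by (simp add: hom_def)

lemma cells_iff: "\<alpha> \<in> cells C f g \<longleftrightarrow> \<alpha> \<in> Ce C \<and> d2 C \<alpha> = f \<and> c2 C \<alpha> = g"
  by (simp add: cells_def)

lemma hom_ob: "m \<in> hom C X Y \<Longrightarrow> X \<in> Ob C \<and> Y \<in> Ob C"
  using ax1 unfolding hom_iff cells_iff by auto

lemma ar_hom: "m \<in> Ar C \<Longrightarrow> m \<in> hom C (sr C m) (tg C m)"
  by (simp add: hom_def)

lemma cmp_hom: "f \<in> hom C X Y \<Longrightarrow> g \<in> hom C Y Z \<Longrightarrow> cmp C g f \<in> hom C X Z"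
  using ax3 unfolding hom_iff cells_iff by auto

lemma i1_hom: "X \<in> Ob C \<Longrightarrow> i1 C X \<in> hom C X X"
  using ax2 unfolding hom_iff cells_iff by auto

lemma cmp_assoc: "f \<in> hom C X Y \<Longrightarrow> g \<in> hom C Y Z \<Longrightarrow> h \<in> hom C Z W \<Longrightarrow>
   cmp C (cmp C h g) f = cmp C h (cmp C g f)"
  using ax4 unfolding hom_iff cells_iff by auto

lemma cmp_idl[simp]: "f \<in> hom C X Y \<Longrightarrow> cmp C (i1 C Y) f = f"
  using ax5 unfolding hom_iff cells_iff by auto
lemma cmp_idr[simp]: "f \<in> hom C X Y \<Longrightarrow> cmp C f (i1 C X) = f"
  using ax5 unfolding hom_iff cells_iff by auto

lemma cell_hom: "\<alpha> \<in> cells C f g \<Longrightarrow> f \<in> hom C X Y \<Longrightarrow> g \<in> hom C X Y"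
  using ax6 unfolding hom_iff cells_iff by auto

lemma cell_hom': "\<alpha> \<in> cells C f g \<Longrightarrow> g \<in> hom C X Y \<Longrightarrow> f \<in> hom C X Y"
  using ax6 unfolding hom_iff cells_iff by auto

lemma cell_ar: "\<alpha> \<in> cells C f g \<Longrightarrow> f \<in> Ar C \<and> g \<in> Ar C"
  using ax6 unfolding hom_iff cells_iff by auto

lemma i2_cell: "f \<in> hom C X Y \<Longrightarrow> i2 C f \<in> cells C f f"
  using ax7 unfolding hom_iff cells_iff by auto

lemma vc_cell: "\<alpha> \<in> cells C f g \<Longrightarrow> \<beta> \<in> cells C g h \<Longrightarrow> vc C \<beta> \<alpha> \<in> cells C f h"
  using ax8 unfolding hom_iff cells_iff by auto

lemma vc_assoc: "\<alpha> \<in> cells C f g \<Longrightarrow> \<beta> \<in> cells C g h \<Longrightarrow> \<gamma> \<in> cells C h k \<Longrightarrow>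
  vc C (vc C \<gamma> \<beta>) \<alpha> = vc C \<gamma> (vc C \<beta> \<alpha>)"
  using ax9 unfolding hom_iff cells_iff by auto

lemma vc_idl[simp]: "\<alpha> \<in> cells C f g \<Longrightarrow> vc C (i2 C g) \<alpha> = \<alpha>"
  using ax10 unfolding hom_iff cells_iff by auto
lemma vc_idr[simp]: "\<alpha> \<in> cells C f g \<Longrightarrow> vc C \<alpha> (i2 C f) = \<alpha>"
  using ax10 unfolding hom_iff cells_iff by auto

lemma hc_cell: "\<alpha> \<in> cells C f f' \<Longrightarrow> f \<in> hom C X Y \<Longrightarrow> \<beta> \<in> cells C g g' \<Longrightarrow> g \<in> hom C Y Z \<Longrightarrow>
   hc C \<beta> \<alpha> \<in> cells C (cmp C g f) (cmp C g' f')"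
  using ax11 unfolding hom_iff cells_iff by auto

lemma hc_assoc: "\<alpha> \<in> cells C f f' \<Longrightarrow> f \<in> hom C X Y \<Longrightarrow> \<beta> \<in> cells C g g' \<Longrightarrow> g \<in> hom C Y Z \<Longrightarrow>
   \<gamma> \<in> cells C h h' \<Longrightarrow> h \<in> hom C Z W \<Longrightarrow>
   hc C (hc C \<gamma> \<beta>) \<alpha> = hc C \<gamma> (hc C \<beta> \<alpha>)"
proof -
  note ax = ax12
  assume "\<alpha> \<in> cells C f f'" "f \<in> hom C X Y" "\<beta> \<in> cells C g g'" "g \<in> hom C Y Z"
   "\<gamma> \<in> cells C h h'" "h \<in> hom C Z W"
  then show ?thesis using ax unfolding cells_iff hom_iff by auto
qed

lemma hc_i2: "f \<in> hom C X Y \<Longrightarrow> g \<in> hom C Y Z \<Longrightarrow> hc C (i2 C g) (i2 C f) = i2 C (cmp C g f)"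
  using ax14 unfolding hom_iff cells_iff by auto

lemma hc_idl: "\<alpha> \<in> cells C f f' \<Longrightarrow> f \<in> hom C X Y \<Longrightarrow> hc C (i2 C (i1 C Y)) \<alpha> = \<alpha>"
  using ax13 unfolding hom_iff cells_iff by auto
lemma hc_idr: "\<alpha> \<in> cells C f f' \<Longrightarrow> f \<in> hom C X Y \<Longrightarrow> hc C \<alpha> (i2 C (i1 C X)) = \<alpha>"
  using ax13 unfolding hom_iff cells_iff by auto

lemma interchange: "\<alpha> \<in> cells C f f' \<Longrightarrow> \<alpha>' \<in> cells C f' f'' \<Longrightarrow> f \<in> hom C X Y \<Longrightarrow>
  \<beta> \<in> cells C g g' \<Longrightarrow> \<beta>' \<in> cells C g' g'' \<Longrightarrow> g \<in> hom C Y Z \<Longrightarrow>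
  hc C (vc C \<beta>' \<beta>) (vc C \<alpha>' \<alpha>) = vc C (hc C \<beta>' \<alpha>') (hc C \<beta> \<alpha>)"
proof -
  note ax = ax15
  assume "\<alpha> \<in> cells C f f'" "\<alpha>' \<in> cells C f' f''" "f \<in> hom C X Y"
    "\<beta> \<in> cells C g g'" "\<beta>' \<in> cells C g' g''" "g \<in> hom C Y Z"
  then show ?thesis using ax unfolding cells_iff hom_iff by auto
qed

lemma vc_i2: "f \<in> hom C X Y \<Longrightarrow> vc C (i2 C f) (i2 C f) = i2 C f"
  using i2_cell vc_idl by blast

lemma lw_cell: "\<alpha> \<in> cells C f f' \<Longrightarrow> f \<in> hom C X Y \<Longrightarrow> g \<in> hom C Y Z \<Longrightarrow>
   lw C g \<alpha> \<in> cells C (cmp C g f) (cmp C g f')"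
  unfolding lw_def by (rule hc_cell[where X=X and Y=Y and Z=Z]) (auto intro: i2_cell)

lemma rw_cell: "\<alpha> \<in> cells C g g' \<Longrightarrow> g \<in> hom C Y Z \<Longrightarrow> f \<in> hom C X Y \<Longrightarrow>
   rw C \<alpha> f \<in> cells C (cmp C g f) (cmp C g' f)"
  unfolding rw_def by (rule hc_cell[where X=X and Y=Y and Z=Z]) (auto intro: i2_cell)

lemma lw_vc: "\<alpha> \<in> cells C f f' \<Longrightarrow> \<beta> \<in> cells C f' f'' \<Longrightarrow> f \<in> hom C X Y \<Longrightarrow> g \<in> hom C Y Z \<Longrightarrow>
  lw C g (vc C \<beta> \<alpha>) = vc C (lw C g \<beta>) (lw C g \<alpha>)"
proof -
  assume a: "\<alpha> \<in> cells C f f'" "\<beta> \<in> cells C f' f''" "f \<in> hom C X Y" "g \<in> hom C Y Z"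
  have "lw C g (vc C \<beta> \<alpha>) = hc C (vc C (i2 C g) (i2 C g)) (vc C \<beta> \<alpha>)"
    unfolding lw_def using a(4) by (simp add: vc_i2)
  also have "\<dots> = vc C (hc C (i2 C g) \<beta>) (hc C (i2 C g) \<alpha>)"
    using a by (intro interchange[where f=f and f'=f' and f''=f'' and g=g and g'=g and g''=g and X=X and Y=Y and Z=Z]) (auto intro: i2_cell)
  finally show ?thesis unfolding lw_def .
qed

lemma rw_vc: "\<alpha> \<in> cells C g g' \<Longrightarrow> \<beta> \<in> cells C g' g'' \<Longrightarrow> g \<in> hom C Y Z \<Longrightarrow> f \<in> hom C X Y \<Longrightarrow>
  rw C (vc C \<beta> \<alpha>) f = vc C (rw C \<beta> f) (rw C \<alpha> f)"
proof -
  assume a: "\<alpha> \<in> cells C g g'" "\<beta> \<in> cells C g' g''" "g \<in> hom C Y Z" "f \<in> hom C X Y"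
  have "rw C (vc C \<beta> \<alpha>) f = hc C (vc C \<beta> \<alpha>) (vc C (i2 C f) (i2 C f))"
    unfolding rw_def using a(4) by (simp add: vc_i2)
  also have "\<dots> = vc C (hc C \<beta> (i2 C f)) (hc C \<alpha> (i2 C f))"
    using a by (intro interchange[where f=f and f'=f and f''=f and g=g and g'=g' and g''=g'' and X=X and Y=Y and Z=Z]) (auto intro: i2_cell)
  finally show ?thesis unfolding rw_def .
qed

lemma lw_lw: "\<alpha> \<in> cells C f f' \<Longrightarrow> f \<in> hom C X Y \<Longrightarrow> g \<in> hom C Y Z \<Longrightarrow> h \<in> hom C Z W \<Longrightarrow>
  lw C h (lw C g \<alpha>) = lw C (cmp C h g) \<alpha>"
proof -
  assume a: "\<alpha> \<in> cells C f f'" "f \<in> hom C X Y" "g \<in> hom C Y Z" "h \<in> hom C Z W"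
  have "hc C (i2 C h) (hc C (i2 C g) \<alpha>) = hc C (hc C (i2 C h) (i2 C g)) \<alpha>"
    using a by (intro hc_assoc[where f=f and f'=f' and g=g and g'=g and h=h and h'=h and X=X and Y=Y and Z=Z and W=W, symmetric]) (auto intro: i2_cell)
  then show ?thesis unfolding lw_def using a by (simp add: hc_i2)
qed

lemma rw_rw: "\<alpha> \<in> cells C h h' \<Longrightarrow> f \<in> hom C X Y \<Longrightarrow> g \<in> hom C Y Z \<Longrightarrow> h \<in> hom C Z W \<Longrightarrow>
  rw C (rw C \<alpha> g) f = rw C \<alpha> (cmp C g f)"
proof -
  assume a: "\<alpha> \<in> cells C h h'" "f \<in> hom C X Y" "g \<in> hom C Y Z" "h \<in> hom C Z W"
  have "hc C (hc C \<alpha> (i2 C g)) (i2 C f) = hc C \<alpha> (hc C (i2 C g) (i2 C f))"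
    using a by (intro hc_assoc[where f=f and f'=f and g=g and g'=g and h=h and h'=h' and X=X and Y=Y and Z=Z and W=W]) (auto intro: i2_cell)
  then show ?thesis unfolding rw_def using a by (simp add: hc_i2)
qed

lemma lw_rw: "\<alpha> \<in> cells C g g' \<Longrightarrow> f \<in> hom C X Y \<Longrightarrow> g \<in> hom C Y Z \<Longrightarrow> h \<in> hom C Z W \<Longrightarrow>
  lw C h (rw C \<alpha> f) = rw C (lw C h \<alpha>) f"
  unfolding rw_def lw_def by (rule hc_assoc[where f=f and f'=f and g=g and g'=g' and h=h and h'=h and X=X and Y=Y and Z=Z and W=W, symmetric]) (auto intro: i2_cell)

lemma lw_i2: "f \<in> hom C X Y \<Longrightarrow> g \<in> hom C Y Z \<Longrightarrow> lw C g (i2 C f) = i2 C (cmp C g f)"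
  unfolding lw_def by (rule hc_i2)
lemma rw_i2: "f \<in> hom C X Y \<Longrightarrow> g \<in> hom C Y Z \<Longrightarrow> rw C (i2 C g) f = i2 C (cmp C g f)"
  unfolding rw_def by (rule hc_i2)

lemma lw_id: "\<alpha> \<in> cells C f f' \<Longrightarrow> f \<in> hom C X Y \<Longrightarrow> lw C (i1 C Y) \<alpha> = \<alpha>"
  unfolding lw_def by (rule hc_idl)
lemma rw_id: "\<alpha> \<in> cells C f f' \<Longrightarrow> f \<in> hom C X Y \<Longrightarrow> rw C \<alpha> (i1 C X) = \<alpha>"
  unfolding rw_def by (rule hc_idr)

lemma hc_lw_rw: "\<alpha> \<in> cells C f f' \<Longrightarrow> f \<in> hom C X Y \<Longrightarrow> \<beta> \<in> cells C g g' \<Longrightarrow> g \<in> hom C Y Z \<Longrightarrow>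
  hc C \<beta> \<alpha> = vc C (lw C g' \<alpha>) (rw C \<beta> f)"
proof -
  assume a: "\<alpha> \<in> cells C f f'" "f \<in> hom C X Y" "\<beta> \<in> cells C g g'" "g \<in> hom C Y Z"
  have g': "g' \<in> hom C Y Z" using a cell_hom by blast
  have "hc C \<beta> \<alpha> = hc C (vc C (i2 C g') \<beta>) (vc C \<alpha> (i2 C f))" using a by simp
  also have "\<dots> = vc C (hc C (i2 C g') \<alpha>) (hc C \<beta> (i2 C f))"
    using a g' by (intro interchange[where f=f and f'=f and f''=f' and g=g and g'=g' and g''=g' and X=X and Y=Y and Z=Z]) (auto intro: i2_cell)
  finally show ?thesis unfolding lw_def rw_def .
qed

lemma hc_rw_lw: "\<alpha> \<in> cells C f f' \<Longrightarrow> f \<in> hom C X Y \<Longrightarrow> \<beta> \<in> cells C g g' \<Longrightarrow> g \<in> hom C Y Z \<Longrightarrow>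
  hc C \<beta> \<alpha> = vc C (rw C \<beta> f') (lw C g \<alpha>)"
proof -
  assume a: "\<alpha> \<in> cells C f f'" "f \<in> hom C X Y" "\<beta> \<in> cells C g g'" "g \<in> hom C Y Z"
  have f': "f' \<in> hom C X Y" using a cell_hom by blast
  have "hc C \<beta> \<alpha> = hc C (vc C \<beta> (i2 C g)) (vc C (i2 C f') \<alpha>)" using a by simp
  also have "\<dots> = vc C (hc C \<beta> (i2 C f')) (hc C (i2 C g) \<alpha>)"
    using a f' by (intro interchange[where f=f and f'=f' and f''=f' and g=g and g'=g and g''=g' and X=X and Y=Y and Z=Z]) (auto intro: i2_cell)
  finally show ?thesis unfolding lw_def rw_def .
qed

lemma whisker_exchange: "\<alpha> \<in> cells C f f' \<Longrightarrow> f \<in> hom C X Y \<Longrightarrow> \<beta> \<in> cells C g g' \<Longrightarrow> g \<in> hom C Y Z \<Longrightarrow>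
  vc C (lw C g' \<alpha>) (rw C \<beta> f) = vc C (rw C \<beta> f') (lw C g \<alpha>)"
  using hc_lw_rw hc_rw_lw by metis

lemmas cellI = i2_cell vc_cell lw_cell rw_cell cmp_hom i1_hom

lemma iso2_i2: "f \<in> hom C X Y \<Longrightarrow> iso2 C (i2 C f)"
  using i2_cell[of f X Y] vc_i2[of f X Y] unfolding iso2_def Bex_def cells_iff by auto

lemma inv2: assumes "iso2 C \<alpha>" "\<alpha> \<in> cells C f g"
  shows "inv2 C \<alpha> \<in> cells C g f" "vc C (inv2 C \<alpha>) \<alpha> = i2 C f" "vc C \<alpha> (inv2 C \<alpha>) = i2 C g"
proof -
  have "\<exists>\<beta>. \<beta> \<in> cells C (c2 C \<alpha>) (d2 C \<alpha>) \<and>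
        vc C \<beta> \<alpha> = i2 C (d2 C \<alpha>) \<and> vc C \<alpha> \<beta> = i2 C (c2 C \<alpha>)"
    using assms(1) unfolding iso2_def by blast
  from someI_ex[OF this] assms(2) show "inv2 C \<alpha> \<in> cells C g f" "vc C (inv2 C \<alpha>) \<alpha> = i2 C f" "vc C \<alpha> (inv2 C \<alpha>) = i2 C g"
    unfolding inv2_def cells_iff by auto
qed

lemma iso2_intro: "\<alpha> \<in> cells C f g \<Longrightarrow> \<beta> \<in> cells C g f \<Longrightarrow> vc C \<beta> \<alpha> = i2 C f \<Longrightarrow> vc C \<alpha> \<beta> = i2 C g \<Longrightarrow> iso2 C \<alpha>"
  unfolding iso2_def Bex_def cells_iff by auto

lemma iso2_inv2: assumes "iso2 C \<alpha>" "\<alpha> \<in> cells C f g" shows "iso2 C (inv2 C \<alpha>)"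
  using inv2[OF assms] assms(2) by (intro iso2_intro[of _ g f \<alpha>])

lemma vc_cancel_l: assumes "iso2 C \<alpha>" "\<alpha> \<in> cells C f g" "x \<in> cells C e f"
  shows "vc C (inv2 C \<alpha>) (vc C \<alpha> x) = x"
proof -
  note i = inv2[OF assms(1,2)]
  have "vc C (inv2 C \<alpha>) (vc C \<alpha> x) = vc C (vc C (inv2 C \<alpha>) \<alpha>) x"
    using vc_assoc[OF assms(3,2) i(1)] by simp
  then show ?thesis using i assms(3) by simp
qed

lemma vc_cancel_l': assumes "iso2 C \<alpha>" "\<alpha> \<in> cells C f g" "x \<in> cells C e g"
  shows "vc C \<alpha> (vc C (inv2 C \<alpha>) x) = x"
proof -
  note i = inv2[OF assms(1,2)]
  have "vc C \<alpha> (vc C (inv2 C \<alpha>) x) = vc C (vc C \<alpha> (inv2 C \<alpha>)) x"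
    using vc_assoc[OF assms(3) i(1) assms(2)] by simp
  then show ?thesis using i assms(3) by simp
qed

lemma vc_cancel_r: assumes "iso2 C \<alpha>" "\<alpha> \<in> cells C f g" "x \<in> cells C g h"
  shows "vc C (vc C x \<alpha>) (inv2 C \<alpha>) = x"
proof -
  note i = inv2[OF assms(1,2)]
  have "vc C (vc C x \<alpha>) (inv2 C \<alpha>) = vc C x (vc C \<alpha> (inv2 C \<alpha>))"
    using vc_assoc[OF i(1) assms(2,3)] by simp
  then show ?thesis using i assms(3) by simp
qed

lemma vc_cancel_r': assumes "iso2 C \<alpha>" "\<alpha> \<in> cells C f g" "x \<in> cells C f h"
  shows "vc C (vc C x (inv2 C \<alpha>)) \<alpha> = x"
proof -
  note i = inv2[OF assms(1,2)]
  have "vc C (vc C x (inv2 C \<alpha>)) \<alpha> = vc C x (vc C (inv2 C \<alpha>) \<alpha>)"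
    using vc_assoc[OF assms(2) i(1) assms(3)] by simp
  then show ?thesis using i assms(3) by simp
qed

lemma inv2_unique: assumes "iso2 C \<alpha>" "\<alpha> \<in> cells C f g" "\<beta> \<in> cells C g f" "vc C \<beta> \<alpha> = i2 C f"
  shows "inv2 C \<alpha> = \<beta>"
  using vc_cancel_r[OF assms(1,2,3)] assms(4) inv2[OF assms(1,2)] by simp

lemma inv2_unique': assumes "iso2 C \<alpha>" "\<alpha> \<in> cells C f g" "\<beta> \<in> cells C g f" "vc C \<alpha> \<beta> = i2 C g"
  shows "inv2 C \<alpha> = \<beta>"
  using vc_cancel_l[OF assms(1,2,3)] assms(4) inv2[OF assms(1,2)] by simp

lemma iso2_vc: assumes "iso2 C \<alpha>" "\<alpha> \<in> cells C f g" "iso2 C \<beta>" "\<beta> \<in> cells C g h"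
  shows "iso2 C (vc C \<beta> \<alpha>)" "inv2 C (vc C \<beta> \<alpha>) = vc C (inv2 C \<alpha>) (inv2 C \<beta>)"
proof -
  note a = inv2[OF assms(1,2)] and b = inv2[OF assms(3,4)]
  have c1: "vc C \<beta> \<alpha> \<in> cells C f h" using assms by (auto intro: cellI)
  have c2: "vc C (inv2 C \<alpha>) (inv2 C \<beta>) \<in> cells C h f" using a b by (auto intro: cellI)
  have "vc C (vc C (inv2 C \<alpha>) (inv2 C \<beta>)) (vc C \<beta> \<alpha>) = vc C (inv2 C \<alpha>) (vc C (inv2 C \<beta>) (vc C \<beta> \<alpha>))"
    using vc_assoc[OF c1 b(1) a(1)] by simp
  also have "\<dots> = i2 C f" using vc_cancel_l[OF assms(3,4,2)] a by simp
  finally have e1: "vc C (vc C (inv2 C \<alpha>) (inv2 C \<beta>)) (vc C \<beta> \<alpha>) = i2 C f" .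
  have "vc C (vc C \<beta> \<alpha>) (vc C (inv2 C \<alpha>) (inv2 C \<beta>)) = vc C \<beta> (vc C \<alpha> (vc C (inv2 C \<alpha>) (inv2 C \<beta>)))"
    using vc_assoc[OF c2 assms(2,4)] by simp
  also have "\<dots> = i2 C h" using vc_cancel_l'[OF assms(1,2) b(1)] b by simp
  finally have e2: "vc C (vc C \<beta> \<alpha>) (vc C (inv2 C \<alpha>) (inv2 C \<beta>)) = i2 C h" .
  show i: "iso2 C (vc C \<beta> \<alpha>)" using iso2_intro[OF c1 c2 e1 e2] .
  show "inv2 C (vc C \<beta> \<alpha>) = vc C (inv2 C \<alpha>) (inv2 C \<beta>)"
    using inv2_unique[OF i c1 c2 e1] .
qed

lemma inv2_lw: assumes "iso2 C \<alpha>" "\<alpha> \<in> cells C f f'" "f \<in> hom C X Y" "g \<in> hom C Y Z"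
  shows "iso2 C (lw C g \<alpha>)" "inv2 C (lw C g \<alpha>) = lw C g (inv2 C \<alpha>)"
proof -
  note a = inv2[OF assms(1,2)]
  have f': "f' \<in> hom C X Y" using assms cell_hom by blast
  have 1: "vc C (lw C g (inv2 C \<alpha>)) (lw C g \<alpha>) = i2 C (cmp C g f)"
    using lw_vc[OF assms(2) a(1) assms(3,4), symmetric] a(2) lw_i2[OF assms(3,4)] by simp
  have 2: "vc C (lw C g \<alpha>) (lw C g (inv2 C \<alpha>)) = i2 C (cmp C g f')"
    using lw_vc[OF a(1) assms(2) f' assms(4), symmetric] a(3) lw_i2[OF f' assms(4)] by simp
  have c1: "lw C g \<alpha> \<in> cells C (cmp C g f) (cmp C g f')" using assms by (intro lw_cell)
  have c2: "lw C g (inv2 C \<alpha>) \<in> cells C (cmp C g f') (cmp C g f)" using assms a f' by (intro lw_cell)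
  show i: "iso2 C (lw C g \<alpha>)" using 1 2 c1 c2 by (rule iso2_intro[rotated 2])
  show "inv2 C (lw C g \<alpha>) = lw C g (inv2 C \<alpha>)"
    using 1 c1 c2 i by (intro inv2_unique)
qed

lemma inv2_rw: assumes "iso2 C \<alpha>" "\<alpha> \<in> cells C g g'" "g \<in> hom C Y Z" "f \<in> hom C X Y"
  shows "iso2 C (rw C \<alpha> f)" "inv2 C (rw C \<alpha> f) = rw C (inv2 C \<alpha>) f"
proof -
  note a = inv2[OF assms(1,2)]
  have g': "g' \<in> hom C Y Z" using assms cell_hom by blast
  have 1: "vc C (rw C (inv2 C \<alpha>) f) (rw C \<alpha> f) = i2 C (cmp C g f)"
    using rw_vc[OF assms(2) a(1) assms(3,4), symmetric] a(2) rw_i2[OF assms(4,3)] by simp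
  have 2: "vc C (rw C \<alpha> f) (rw C (inv2 C \<alpha>) f) = i2 C (cmp C g' f)"
    using rw_vc[OF a(1) assms(2) g' assms(4), symmetric] a(3) rw_i2[OF assms(4) g'] by simp
  have c1: "rw C \<alpha> f \<in> cells C (cmp C g f) (cmp C g' f)" using assms by (intro rw_cell)
  have c2: "rw C (inv2 C \<alpha>) f \<in> cells C (cmp C g' f) (cmp C g f)" using assms a g' by (intro rw_cell)
  show i: "iso2 C (rw C \<alpha> f)" using 1 2 c1 c2 by (rule iso2_intro[rotated 2])
  show "inv2 C (rw C \<alpha> f) = rw C (inv2 C \<alpha>) f"
    using 1 c1 c2 i by (intro inv2_unique)
qed

lemma inv2_i2: "f \<in> hom C X Y \<Longrightarrow> inv2 C (i2 C f) = i2 C f"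
  using inv2_unique[OF iso2_i2 i2_cell i2_cell vc_i2] by blast

lemma inv2_inv2: assumes "iso2 C \<alpha>" "\<alpha> \<in> cells C f g" shows "inv2 C (inv2 C \<alpha>) = \<alpha>"
  using inv2[OF assms] iso2_inv2[OF assms] assms(2) by (intro inv2_unique[of _ g f])

end


context tc begin

lemma sq_inv: assumes "iso2 C x" "x \<in> cells C P P'" "iso2 C y" "y \<in> cells C Q Q'"
  "p \<in> cells C P Q" "p' \<in> cells C P' Q'" "vc C p' x = vc C y p"
  shows "vc C p (inv2 C x) = vc C (inv2 C y) p'"
proof -
  note ix = inv2[OF assms(1,2)] and iy = inv2[OF assms(3,4)]
  have "vc C (inv2 C y) (vc C p' x) = p" using assms(7) vc_cancel_l[OF assms(3,4,5)] by simp
  moreover have "vc C (inv2 C y) (vc C p' x) = vc C (vc C (inv2 C y) p') x"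
    using vc_assoc[OF assms(2,6) iy(1)] by simp
  ultimately have "vc C (vc C (inv2 C y) p') x = p" by simp
  then have "vc C p (inv2 C x) = vc C (vc C (vc C (inv2 C y) p') x) (inv2 C x)" by simp
  also have "\<dots> = vc C (inv2 C y) p'"
    using vc_cancel_r[OF assms(1,2)] vc_cell[OF assms(6) iy(1)] by simp
  finally show ?thesis .
qed

end

definition lifts :: "('o,'m,'c,'x) twocat_scheme \<Rightarrow> 'm \<Rightarrow> ('m \<Rightarrow> 'c \<Rightarrow> 'c) \<Rightarrow> bool" where
  "lifts C f cl \<longleftrightarrow> f \<in> Ar C \<and>
     (\<forall>X\<in>Ob C. \<forall>g\<in>hom C X (sr C f). \<forall>h\<in>hom C X (tg C f).
        \<forall>\<alpha>\<in>cells C (cmp C f g) h. iso2 C \<alpha> \<longrightarrow>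
          c2 C (cl g \<alpha>) \<in> hom C X (sr C f) \<and> cl g \<alpha> \<in> cells C g (c2 C (cl g \<alpha>)) \<and>
          iso2 C (cl g \<alpha>) \<and> lw C f (cl g \<alpha>) = \<alpha>)"

lemma rep_isofib_lifts: "rep_isofib C f \<longleftrightarrow> (\<exists>cl. lifts C f cl)"
proof
  assume r: "rep_isofib C f"
  define cl where "cl = (\<lambda>g \<alpha>. SOME \<alpha>'. \<exists>h'. h' \<in> hom C (sr C g) (sr C f) \<and> \<alpha>' \<in> cells C g h' \<and> iso2 C \<alpha>' \<and> lw C f \<alpha>' = \<alpha>)"
  have "lifts C f cl" unfolding lifts_def
  proof (intro conjI ballI impI)
    show "f \<in> Ar C" using r unfolding rep_isofib_def by blast
    fix X g h \<alpha> assume a: "X \<in> Ob C" "g \<in> hom C X (sr C f)" "h \<in> hom C X (tg C f)" "\<alpha> \<in> cells C (cmp C f g) h" "iso2 C \<alpha>"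
    then obtain h' \<alpha>' where h': "h' \<in> hom C X (sr C f)" "\<alpha>' \<in> cells C g h'" "iso2 C \<alpha>'" "lw C f \<alpha>' = \<alpha>"
      using r unfolding rep_isofib_def by blast
    have sg: "sr C g = X" using a(2) by (simp add: hom_def)
    have "\<exists>\<alpha>'. \<exists>h'. h' \<in> hom C (sr C g) (sr C f) \<and> \<alpha>' \<in> cells C g h' \<and> iso2 C \<alpha>' \<and> lw C f \<alpha>' = \<alpha>"
      using h' sg by blast
    from someI_ex[OF this] obtain h'' where
      "h'' \<in> hom C X (sr C f)" "cl g \<alpha> \<in> cells C g h''" "iso2 C (cl g \<alpha>)" "lw C f (cl g \<alpha>) = \<alpha>"
      unfolding cl_def sg by blast
    then show "c2 C (cl g \<alpha>) \<in> hom C X (sr C f)" "cl g \<alpha> \<in> cells C g (c2 C (cl g \<alpha>))"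
      "iso2 C (cl g \<alpha>)" "lw C f (cl g \<alpha>) = \<alpha>" by (auto simp: cells_def)
  qed
  then show "\<exists>cl. lifts C f cl" by blast
next
  assume "\<exists>cl. lifts C f cl"
  then obtain cl where l: "lifts C f cl" by blast
  show "rep_isofib C f" unfolding rep_isofib_def
  proof (intro conjI ballI impI)
    show "f \<in> Ar C" using l unfolding lifts_def by blast
    fix X g h \<alpha> assume a: "X \<in> Ob C" "g \<in> hom C X (sr C f)" "h \<in> hom C X (tg C f)" "\<alpha> \<in> cells C (cmp C f g) h" "iso2 C \<alpha>"
    then show "\<exists>h'\<in>hom C X (sr C f). \<exists>\<alpha>'\<in>cells C g h'. iso2 C \<alpha>' \<and> lw C f \<alpha>' = \<alpha>"
      using l unfolding lifts_def by blast
  qed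
qed

lemma cleavage_lifts: "cleavage C f cl \<Longrightarrow> lifts C f cl"
  unfolding cleavage_def lifts_def by blast

lemma ex1_uniq: "\<exists>!x. P x \<Longrightarrow> P a \<Longrightarrow> P b \<Longrightarrow> a = b"
  by blast

locale pset = tc C for C :: "('o,'m,'c,'x) twocat_scheme" +
  fixes f A B AI dm cd \<iota> L u v lam w
  assumes f: "f \<in> hom C A B" and IP: "iso_power C A AI dm cd \<iota>"
    and PL: "pseudolimit C f L u v lam" and w: "w \<in> hom C AI L"
    and uw: "cmp C u w = cd" and vw: "cmp C v w = cmp C f dm"
    and lamw: "rw C lam w = lw C f \<iota>"
begin

lemma srf: "sr C f = A" and tgf: "tg C f = B" using f by (auto simp: hom_def)
lemma srw: "sr C w = AI" and tgw: "tg C w = L" using w by (auto simp: hom_def)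

lemma IPparts: "A \<in> Ob C \<and> AI \<in> Ob C \<and> dm \<in> hom C AI A \<and> cd \<in> hom C AI A \<and>
     \<iota> \<in> cells C dm cd \<and> iso2 C \<iota>"
  using IP unfolding iso_power_def by (elim conjE) (intro conjI; assumption)

lemma PLparts: "f \<in> Ar C \<and> L \<in> Ob C \<and> u \<in> hom C L (sr C f) \<and> v \<in> hom C L (tg C f) \<and>
     lam \<in> cells C v (cmp C f u) \<and> iso2 C lam"
  using PL unfolding pseudolimit_def by (elim conjE) (intro conjI; assumption)

lemma basic: "A \<in> Ob C" "B \<in> Ob C" "AI \<in> Ob C" "L \<in> Ob C"
  "dm \<in> hom C AI A" "cd \<in> hom C AI A" "\<iota> \<in> cells C dm cd" "iso2 C \<iota>"
  "u \<in> hom C L A" "v \<in> hom C L B" "lam \<in> cells C v (cmp C f u)" "iso2 C lam"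
  using IPparts PLparts srf tgf hom_ob[OF f] by simp_all

lemma IP1: "X \<in> Ob C \<Longrightarrow> a \<in> hom C X A \<Longrightarrow> b \<in> hom C X A \<Longrightarrow> \<alpha> \<in> cells C a b \<Longrightarrow> iso2 C \<alpha> \<Longrightarrow>
  \<exists>!m. m \<in> hom C X AI \<and> cmp C dm m = a \<and> cmp C cd m = b \<and> rw C \<iota> m = \<alpha>"
proof -
  have "\<forall>X\<in>Ob C. \<forall>a\<in>hom C X A. \<forall>b\<in>hom C X A.
        \<forall>\<alpha>\<in>cells C a b. iso2 C \<alpha> \<longrightarrow>
          (\<exists>!m. m \<in> hom C X AI \<and> cmp C dm m = a \<and> cmp C cd m = b \<and> rw C \<iota> m = \<alpha>)"
    using IP unfolding iso_power_def by (elim conjE) assumption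
  then show "X \<in> Ob C \<Longrightarrow> a \<in> hom C X A \<Longrightarrow> b \<in> hom C X A \<Longrightarrow> \<alpha> \<in> cells C a b \<Longrightarrow> iso2 C \<alpha> \<Longrightarrow> ?thesis"
    by blast
qed

lemma IP2: "X \<in> Ob C \<Longrightarrow> m \<in> hom C X AI \<Longrightarrow> m' \<in> hom C X AI \<Longrightarrow>
  \<sigma>d \<in> cells C (cmp C dm m) (cmp C dm m') \<Longrightarrow> \<sigma>c \<in> cells C (cmp C cd m) (cmp C cd m') \<Longrightarrow>
  vc C (rw C \<iota> m') \<sigma>d = vc C \<sigma>c (rw C \<iota> m) \<Longrightarrow>
  \<exists>!\<sigma>. \<sigma> \<in> cells C m m' \<and> lw C dm \<sigma> = \<sigma>d \<and> lw C cd \<sigma> = \<sigma>c"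
proof -
  have "\<forall>X\<in>Ob C. \<forall>m\<in>hom C X AI. \<forall>m'\<in>hom C X AI.
        \<forall>\<sigma>d\<in>cells C (cmp C dm m) (cmp C dm m'). \<forall>\<sigma>c\<in>cells C (cmp C cd m) (cmp C cd m').
          vc C (rw C \<iota> m') \<sigma>d = vc C \<sigma>c (rw C \<iota> m) \<longrightarrow>
          (\<exists>!\<sigma>. \<sigma> \<in> cells C m m' \<and> lw C dm \<sigma> = \<sigma>d \<and> lw C cd \<sigma> = \<sigma>c)"
    using IP unfolding iso_power_def by (elim conjE) assumption
  then show "X \<in> Ob C \<Longrightarrow> m \<in> hom C X AI \<Longrightarrow> m' \<in> hom C X AI \<Longrightarrow>
  \<sigma>d \<in> cells C (cmp C dm m) (cmp C dm m') \<Longrightarrow> \<sigma>c \<in> cells C (cmp C cd m) (cmp C cd m') \<Longrightarrow>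
  vc C (rw C \<iota> m') \<sigma>d = vc C \<sigma>c (rw C \<iota> m) \<Longrightarrow> ?thesis"
    by blast
qed

lemma PL1: "X \<in> Ob C \<Longrightarrow> a \<in> hom C X A \<Longrightarrow> b \<in> hom C X B \<Longrightarrow> \<beta> \<in> cells C b (cmp C f a) \<Longrightarrow> iso2 C \<beta> \<Longrightarrow>
  \<exists>!m. m \<in> hom C X L \<and> cmp C u m = a \<and> cmp C v m = b \<and> rw C lam m = \<beta>"
proof -
  have "\<forall>X\<in>Ob C. \<forall>a\<in>hom C X (sr C f). \<forall>b\<in>hom C X (tg C f).
        \<forall>\<beta>\<in>cells C b (cmp C f a). iso2 C \<beta> \<longrightarrow>
          (\<exists>!m. m \<in> hom C X L \<and> cmp C u m = a \<and> cmp C v m = b \<and> rw C lam m = \<beta>)"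
    using PL unfolding pseudolimit_def by (elim conjE) assumption
  then show "X \<in> Ob C \<Longrightarrow> a \<in> hom C X A \<Longrightarrow> b \<in> hom C X B \<Longrightarrow> \<beta> \<in> cells C b (cmp C f a) \<Longrightarrow> iso2 C \<beta> \<Longrightarrow> ?thesis"
    unfolding srf tgf by blast
qed

lemma PL2: "X \<in> Ob C \<Longrightarrow> m \<in> hom C X L \<Longrightarrow> m' \<in> hom C X L \<Longrightarrow>
  \<theta>u \<in> cells C (cmp C u m) (cmp C u m') \<Longrightarrow> \<theta>v \<in> cells C (cmp C v m) (cmp C v m') \<Longrightarrow>
  vc C (lw C f \<theta>u) (rw C lam m) = vc C (rw C lam m') \<theta>v \<Longrightarrow>
  \<exists>!\<theta>. \<theta> \<in> cells C m m' \<and> lw C u \<theta> = \<theta>u \<and> lw C v \<theta> = \<theta>v"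
proof -
  have "\<forall>X\<in>Ob C. \<forall>m\<in>hom C X L. \<forall>m'\<in>hom C X L.
        \<forall>\<theta>u\<in>cells C (cmp C u m) (cmp C u m'). \<forall>\<theta>v\<in>cells C (cmp C v m) (cmp C v m').
          vc C (lw C f \<theta>u) (rw C lam m) = vc C (rw C lam m') \<theta>v \<longrightarrow>
          (\<exists>!\<theta>. \<theta> \<in> cells C m m' \<and> lw C u \<theta> = \<theta>u \<and> lw C v \<theta> = \<theta>v)"
    using PL unfolding pseudolimit_def by (elim conjE) assumption
  then show "X \<in> Ob C \<Longrightarrow> m \<in> hom C X L \<Longrightarrow> m' \<in> hom C X L \<Longrightarrow>
  \<theta>u \<in> cells C (cmp C u m) (cmp C u m') \<Longrightarrow> \<theta>v \<in> cells C (cmp C v m) (cmp C v m') \<Longrightarrow>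
  vc C (lw C f \<theta>u) (rw C lam m) = vc C (rw C lam m') \<theta>v \<Longrightarrow> ?thesis"
    by blast
qed

lemma IP_uniq1: assumes "m \<in> hom C X AI" "m' \<in> hom C X AI" "cmp C dm m = cmp C dm m'"
  "cmp C cd m = cmp C cd m'" "rw C \<iota> m = rw C \<iota> m'" shows "m = m'"
proof -
  have X: "X \<in> Ob C" using assms(1) hom_ob by blast
  have c: "rw C \<iota> m \<in> cells C (cmp C dm m) (cmp C cd m)" using basic assms(1) by (intro rw_cell)
  have i: "iso2 C (rw C \<iota> m)" using basic assms(1) by (intro inv2_rw)
  show ?thesis
    by (rule ex1_uniq[OF IP1[OF X cmp_hom[OF assms(1) basic(5)] cmp_hom[OF assms(1) basic(6)] c i]])
       (use assms in simp_all)
qed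

lemma PL_uniq1: assumes "m \<in> hom C X L" "m' \<in> hom C X L" "cmp C u m = cmp C u m'"
  "cmp C v m = cmp C v m'" "rw C lam m = rw C lam m'" shows "m = m'"
proof -
  have X: "X \<in> Ob C" using assms(1) hom_ob by blast
  have c: "rw C lam m \<in> cells C (cmp C v m) (cmp C (cmp C f u) m)" using basic assms(1) by (intro rw_cell)
  then have c': "rw C lam m \<in> cells C (cmp C v m) (cmp C f (cmp C u m))" using cmp_assoc[OF assms(1) basic(9) f] by simp
  have i: "iso2 C (rw C lam m)" using basic assms(1) by (intro inv2_rw)
  show ?thesis
    by (rule ex1_uniq[OF PL1[OF X cmp_hom[OF assms(1) basic(9)] cmp_hom[OF assms(1) basic(10)] c' i]])
       (use assms in simp_all)
qed

lemma IP_compat: assumes "\<sigma> \<in> cells C m m'" "m \<in> hom C X AI"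
  shows "vc C (rw C \<iota> m') (lw C dm \<sigma>) = vc C (lw C cd \<sigma>) (rw C \<iota> m)"
  using whisker_exchange[OF assms basic(7,5)] by simp

lemma PL_compat: assumes "\<theta> \<in> cells C m m'" "m \<in> hom C X L"
  shows "vc C (lw C f (lw C u \<theta>)) (rw C lam m) = vc C (rw C lam m') (lw C v \<theta>)"
proof -
  have "lw C f (lw C u \<theta>) = lw C (cmp C f u) \<theta>" using lw_lw[OF assms basic(9) f] .
  then show ?thesis using whisker_exchange[OF assms basic(11,10)] by simp
qed

lemma IP_uniq2: assumes "\<sigma> \<in> cells C m m'" "\<tau> \<in> cells C m m'" "m \<in> hom C X AI"
  "lw C dm \<sigma> = lw C dm \<tau>" "lw C cd \<sigma> = lw C cd \<tau>" shows "\<sigma> = \<tau>"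
proof -
  have X: "X \<in> Ob C" using assms(3) hom_ob by blast
  have m': "m' \<in> hom C X AI" using cell_hom assms by blast
  show ?thesis by (rule ex1_uniq[OF IP2[OF X assms(3) m' lw_cell[OF assms(1,3) basic(5)] lw_cell[OF assms(1,3) basic(6)]
     IP_compat[OF assms(1,3)]]]) (use assms in simp_all)
qed

lemma PL_uniq2: assumes "\<theta> \<in> cells C m m'" "\<tau> \<in> cells C m m'" "m \<in> hom C X L"
  "lw C u \<theta> = lw C u \<tau>" "lw C v \<theta> = lw C v \<tau>" shows "\<theta> = \<tau>"
proof -
  have X: "X \<in> Ob C" using assms(3) hom_ob by blast
  have m': "m' \<in> hom C X L" using cell_hom assms by blast
  show ?thesis by (rule ex1_uniq[OF PL2[OF X assms(3) m' lw_cell[OF assms(1,3) basic(9)] lw_cell[OF assms(1,3) basic(10)]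
     PL_compat[OF assms(1,3)]]]) (use assms in simp_all)
qed

end


context pset begin

lemma hom_sr: "m \<in> hom C X Y \<Longrightarrow> sr C m = X" by (simp add: hom_def)

lemma uw_m: "m \<in> hom C X AI \<Longrightarrow> cmp C u (cmp C w m) = cmp C cd m"
  using cmp_assoc[OF _ w basic(9), of m X] uw by simp
lemma vw_m: "m \<in> hom C X AI \<Longrightarrow> cmp C v (cmp C w m) = cmp C f (cmp C dm m)"
  using cmp_assoc[OF _ w basic(10), of m X] vw cmp_assoc[OF _ basic(5) f, of m X] by simp
lemma lam_m: assumes "m \<in> hom C X L"
  shows "rw C lam m \<in> cells C (cmp C v m) (cmp C f (cmp C u m))" "iso2 C (rw C lam m)"
  using rw_cell[OF basic(11) basic(10) assms] cmp_assoc[OF assms basic(9) f] inv2_rw[OF basic(12,11,10) assms]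
  by simp_all
lemma iota_m: assumes "m \<in> hom C X AI"
  shows "rw C \<iota> m \<in> cells C (cmp C dm m) (cmp C cd m)" "iso2 C (rw C \<iota> m)"
  using rw_cell[OF basic(7) basic(5) assms] inv2_rw[OF basic(8,7,5) assms] by simp_all
lemma lam_w_m: assumes "m \<in> hom C X AI" shows "rw C lam (cmp C w m) = lw C f (rw C \<iota> m)"
  using rw_rw[OF basic(11) assms w basic(10)] lw_rw[OF basic(7) assms basic(5) f] lamw by simp
lemma lw_uw: assumes "\<sigma> \<in> cells C m m'" "m \<in> hom C X AI"
  shows "lw C u (lw C w \<sigma>) = lw C cd \<sigma>" "lw C v (lw C w \<sigma>) = lw C f (lw C dm \<sigma>)"
  using lw_lw[OF assms w basic(9)] lw_lw[OF assms w basic(10)] lw_lw[OF assms basic(5) f] uw vw by simp_all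

lemma IP_iso: assumes s: "\<sigma> \<in> cells C m m'" and m: "m \<in> hom C X AI"
  and i1: "iso2 C (lw C dm \<sigma>)" and i2: "iso2 C (lw C cd \<sigma>)"
  shows "iso2 C \<sigma>"
proof -
  have X: "X \<in> Ob C" using m hom_ob by blast
  have m': "m' \<in> hom C X AI" using cell_hom s m by blast
  note cd = lw_cell[OF s m basic(5)] and cc = lw_cell[OF s m basic(6)]
  note id = inv2[OF i1 cd] and ic = inv2[OF i2 cc]
  have sq: "vc C (rw C \<iota> m) (inv2 C (lw C dm \<sigma>)) = vc C (inv2 C (lw C cd \<sigma>)) (rw C \<iota> m')"
    by (rule sq_inv[OF i1 cd i2 cc iota_m(1)[OF m] iota_m(1)[OF m'] IP_compat[OF s m]])
  obtain \<tau> where t: "\<tau> \<in> cells C m' m" "lw C dm \<tau> = inv2 C (lw C dm \<sigma>)" "lw C cd \<tau> = inv2 C (lw C cd \<sigma>)"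
    using IP2[OF X m' m id(1) ic(1) sq] by blast
  have e1: "vc C \<tau> \<sigma> = i2 C m"
  proof (rule IP_uniq2[OF vc_cell[OF s t(1)] i2_cell[OF m] m])
    show "lw C dm (vc C \<tau> \<sigma>) = lw C dm (i2 C m)"
      using lw_vc[OF s t(1) m basic(5)] t id lw_i2[OF m basic(5)] by simp
    show "lw C cd (vc C \<tau> \<sigma>) = lw C cd (i2 C m)"
      using lw_vc[OF s t(1) m basic(6)] t ic lw_i2[OF m basic(6)] by simp
  qed
  have e2: "vc C \<sigma> \<tau> = i2 C m'"
  proof (rule IP_uniq2[OF vc_cell[OF t(1) s] i2_cell[OF m'] m'])
    show "lw C dm (vc C \<sigma> \<tau>) = lw C dm (i2 C m')"
      using lw_vc[OF t(1) s m' basic(5)] t id lw_i2[OF m' basic(5)] by simp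
    show "lw C cd (vc C \<sigma> \<tau>) = lw C cd (i2 C m')"
      using lw_vc[OF t(1) s m' basic(6)] t ic lw_i2[OF m' basic(6)] by simp
  qed
  show ?thesis by (rule iso2_intro[OF s t(1) e1 e2])
qed

lemma PL_iso: assumes s: "\<theta> \<in> cells C m m'" and m: "m \<in> hom C X L"
  and i1: "iso2 C (lw C u \<theta>)" and i2: "iso2 C (lw C v \<theta>)"
  shows "iso2 C \<theta>"
proof -
  have X: "X \<in> Ob C" using m hom_ob by blast
  have m': "m' \<in> hom C X L" using cell_hom s m by blast
  note cu = lw_cell[OF s m basic(9)] and cv = lw_cell[OF s m basic(10)]
  note iu = inv2[OF i1 cu] and iv = inv2[OF i2 cv]
  have um: "cmp C u m \<in> hom C X A" using m basic(9) by (rule cmp_hom)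
  note cfu = lw_cell[OF cu um f] and ifu = inv2_lw[OF i1 cu um f]
  have sq: "vc C (rw C lam m) (inv2 C (lw C v \<theta>)) = vc C (inv2 C (lw C f (lw C u \<theta>))) (rw C lam m')"
    by (rule sq_inv[OF i2 cv ifu(1) cfu lam_m(1)[OF m] lam_m(1)[OF m']]) (use PL_compat[OF s m] in simp)
  obtain \<tau> where t: "\<tau> \<in> cells C m' m" "lw C u \<tau> = inv2 C (lw C u \<theta>)" "lw C v \<tau> = inv2 C (lw C v \<theta>)"
    using PL2[OF X m' m iu(1) iv(1)] sq ifu(2) by metis
  have e1: "vc C \<tau> \<theta> = i2 C m"
  proof (rule PL_uniq2[OF vc_cell[OF s t(1)] i2_cell[OF m] m])
    show "lw C u (vc C \<tau> \<theta>) = lw C u (i2 C m)"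
      using lw_vc[OF s t(1) m basic(9)] t iu lw_i2[OF m basic(9)] by simp
    show "lw C v (vc C \<tau> \<theta>) = lw C v (i2 C m)"
      using lw_vc[OF s t(1) m basic(10)] t iv lw_i2[OF m basic(10)] by simp
  qed
  have e2: "vc C \<theta> \<tau> = i2 C m'"
  proof (rule PL_uniq2[OF vc_cell[OF t(1) s] i2_cell[OF m'] m'])
    show "lw C u (vc C \<theta> \<tau>) = lw C u (i2 C m')"
      using lw_vc[OF t(1) s m' basic(9)] t iu lw_i2[OF m' basic(9)] by simp
    show "lw C v (vc C \<theta> \<tau>) = lw C v (i2 C m')"
      using lw_vc[OF t(1) s m' basic(10)] t iv lw_i2[OF m' basic(10)] by simp
  qed
  show ?thesis by (rule iso2_intro[OF s t(1) e1 e2])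
qed

end


context pset begin

definition Wd where "Wd cl g \<gamma> = cl (cmp C dm g) (lw C v \<gamma>)"
definition Wa where "Wa cl g \<gamma> = vc C (lw C u \<gamma>) (vc C (rw C \<iota> g) (inv2 C (Wd cl g \<gamma>)))"
definition Wh where "Wh cl g \<gamma> = (THE m. m \<in> hom C (sr C g) AI \<and> cmp C dm m = c2 C (Wd cl g \<gamma>) \<and>
   cmp C cd m = c2 C (lw C u \<gamma>) \<and> rw C \<iota> m = Wa cl g \<gamma>)"
definition Wcl where "Wcl cl g \<gamma> = (THE \<sigma>. \<sigma> \<in> cells C g (Wh cl g \<gamma>) \<and>
   lw C dm \<sigma> = Wd cl g \<gamma> \<and> lw C cd \<sigma> = lw C u \<gamma>)"

lemma W_props:
  assumes l: "lifts C f cl" and X: "X \<in> Ob C" and g: "g \<in> hom C X AI" and h: "h \<in> hom C X L"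
    and ga: "\<gamma> \<in> cells C (cmp C w g) h" and gi: "iso2 C \<gamma>"
  shows "Wh cl g \<gamma> \<in> hom C X AI" "Wcl cl g \<gamma> \<in> cells C g (Wh cl g \<gamma>)" "iso2 C (Wcl cl g \<gamma>)"
    "lw C w (Wcl cl g \<gamma>) = \<gamma>"
    "cmp C dm (Wh cl g \<gamma>) = c2 C (Wd cl g \<gamma>)" "cmp C cd (Wh cl g \<gamma>) = c2 C (lw C u \<gamma>)"
    "rw C \<iota> (Wh cl g \<gamma>) = Wa cl g \<gamma>"
    "lw C dm (Wcl cl g \<gamma>) = Wd cl g \<gamma>" "lw C cd (Wcl cl g \<gamma>) = lw C u \<gamma>"
proof -
  have wg: "cmp C w g \<in> hom C X L" using g w by (rule cmp_hom)
  have dg: "cmp C dm g \<in> hom C X A" using g basic(5) by (rule cmp_hom)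
  have cg: "cmp C cd g \<in> hom C X A" using g basic(6) by (rule cmp_hom)
  have uh: "cmp C u h \<in> hom C X A" using h basic(9) by (rule cmp_hom)
  have vh: "cmp C v h \<in> hom C X B" using h basic(10) by (rule cmp_hom)
  have gu: "lw C u \<gamma> \<in> cells C (cmp C cd g) (cmp C u h)"
    using lw_cell[OF ga wg basic(9)] uw_m[OF g] by simp
  have gv: "lw C v \<gamma> \<in> cells C (cmp C f (cmp C dm g)) (cmp C v h)"
    using lw_cell[OF ga wg basic(10)] vw_m[OF g] by simp
  have gui: "iso2 C (lw C u \<gamma>)" using inv2_lw(1)[OF gi ga wg basic(9)] .
  have gvi: "iso2 C (lw C v \<gamma>)" using inv2_lw(1)[OF gi ga wg basic(10)] .
  define sd where "sd = Wd cl g \<gamma>"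
  define a2 where "a2 = c2 C sd"
  have L: "a2 \<in> hom C X A" "sd \<in> cells C (cmp C dm g) a2" "iso2 C sd" "lw C f sd = lw C v \<gamma>"
    using l X dg vh gv gvi unfolding lifts_def srf tgf sd_def a2_def Wd_def by blast+
  have fa2: "cmp C f a2 = cmp C v h"
    using lw_cell[OF L(2) dg f] L(4) gv by (simp add: cells_def)
  note isd = inv2[OF L(3,2)]
  note ig = iota_m[OF g]
  have ac: "Wa cl g \<gamma> \<in> cells C a2 (cmp C u h)"
    unfolding Wa_def sd_def[symmetric] using isd(1) ig(1) gu by (intro vc_cell)
  have ai: "iso2 C (Wa cl g \<gamma>)"
    unfolding Wa_def sd_def[symmetric]
    by (rule iso2_vc(1)[OF iso2_vc(1)[OF iso2_inv2[OF L(3,2)] isd(1) ig(2,1)]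
        vc_cell[OF isd(1) ig(1)] gui gu])
  have ex: "\<exists>!m. m \<in> hom C X AI \<and> cmp C dm m = a2 \<and> cmp C cd m = cmp C u h \<and> rw C \<iota> m = Wa cl g \<gamma>"
    by (rule IP1[OF X L(1) uh ac ai])
  have Whe: "Wh cl g \<gamma> = (THE m. m \<in> hom C X AI \<and> cmp C dm m = a2 \<and> cmp C cd m = cmp C u h \<and> rw C \<iota> m = Wa cl g \<gamma>)"
    unfolding Wh_def hom_sr[OF g] a2_def sd_def using gu by (simp add: cells_def)
  have H: "Wh cl g \<gamma> \<in> hom C X AI" "cmp C dm (Wh cl g \<gamma>) = a2" "cmp C cd (Wh cl g \<gamma>) = cmp C u h"
     "rw C \<iota> (Wh cl g \<gamma>) = Wa cl g \<gamma>"
    using theI'[OF ex] unfolding Whe[symmetric] by blast+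
  show "Wh cl g \<gamma> \<in> hom C X AI" "rw C \<iota> (Wh cl g \<gamma>) = Wa cl g \<gamma>" using H by simp_all
  show "cmp C dm (Wh cl g \<gamma>) = c2 C (Wd cl g \<gamma>)" using H a2_def sd_def by simp
  show "cmp C cd (Wh cl g \<gamma>) = c2 C (lw C u \<gamma>)" using H gu by (simp add: cells_def)
  define h' where "h' = Wh cl g \<gamma>"
  have compat: "vc C (rw C \<iota> h') sd = vc C (lw C u \<gamma>) (rw C \<iota> g)"
  proof -
    have "vc C (rw C \<iota> h') sd = vc C (lw C u \<gamma>) (vc C (vc C (rw C \<iota> g) (inv2 C sd)) sd)"
      using H(4) vc_assoc[OF L(2) vc_cell[OF isd(1) ig(1)] gu] unfolding h'_def Wa_def sd_def by simp
    also have "\<dots> = vc C (lw C u \<gamma>) (rw C \<iota> g)"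
      using vc_cancel_r'[OF L(3,2) ig(1)] by simp
    finally show ?thesis .
  qed
  have ex2: "\<exists>!\<sigma>. \<sigma> \<in> cells C g h' \<and> lw C dm \<sigma> = sd \<and> lw C cd \<sigma> = lw C u \<gamma>"
    by (rule IP2[OF X g H(1)[folded h'_def]]) (use L(2) gu H compat in \<open>simp_all add: h'_def\<close>)
  have S: "Wcl cl g \<gamma> \<in> cells C g h'" "lw C dm (Wcl cl g \<gamma>) = sd" "lw C cd (Wcl cl g \<gamma>) = lw C u \<gamma>"
    using theI'[OF ex2] unfolding Wcl_def h'_def[symmetric] sd_def[symmetric] by blast+
  show "Wcl cl g \<gamma> \<in> cells C g (Wh cl g \<gamma>)" using S h'_def by simp
  show "lw C dm (Wcl cl g \<gamma>) = Wd cl g \<gamma>" "lw C cd (Wcl cl g \<gamma>) = lw C u \<gamma>" using S sd_def by simp_all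
  show "iso2 C (Wcl cl g \<gamma>)" using IP_iso[OF S(1) g] S(2,3) L(3) gui by simp
  have h'h: "cmp C w h' = h"
  proof (rule PL_uniq1[OF cmp_hom[OF H(1)[folded h'_def] w] h])
    show "cmp C u (cmp C w h') = cmp C u h" using uw_m[OF H(1)] H(3) h'_def by simp
    show "cmp C v (cmp C w h') = cmp C v h" using vw_m[OF H(1)] H(2) h'_def fa2 by simp
    have "rw C lam (cmp C w h') = lw C f (Wa cl g \<gamma>)" using lam_w_m[OF H(1)] H(4) h'_def by simp
    also have "\<dots> = vc C (lw C f (lw C u \<gamma>)) (vc C (lw C f (rw C \<iota> g)) (lw C f (inv2 C sd)))"
      unfolding Wa_def sd_def[symmetric]
      using lw_vc[OF vc_cell[OF isd(1) ig(1)] gu L(1) f] lw_vc[OF isd(1) ig(1) L(1) f] by simp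
    also have "\<dots> = vc C (lw C f (lw C u \<gamma>)) (vc C (lw C f (rw C \<iota> g)) (inv2 C (lw C v \<gamma>)))"
      using inv2_lw(2)[OF L(3,2) dg f] L(4) by simp
    also have "\<dots> = vc C (vc C (lw C f (lw C u \<gamma>)) (lw C f (rw C \<iota> g))) (inv2 C (lw C v \<gamma>))"
      using vc_assoc[OF inv2(1)[OF gvi gv] lw_cell[OF ig(1) dg f] lw_cell[OF gu cg f]] by simp
    also have "\<dots> = vc C (vc C (rw C lam h) (lw C v \<gamma>)) (inv2 C (lw C v \<gamma>))"
      using PL_compat[OF ga wg] lam_w_m[OF g] by simp
    also have "\<dots> = rw C lam h"
      using vc_cancel_r[OF gvi gv lam_m(1)[OF h]] by simp
    finally show "rw C lam (cmp C w h') = rw C lam h" .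
  qed
  show "lw C w (Wcl cl g \<gamma>) = \<gamma>"
  proof (rule PL_uniq2[OF _ ga wg])
    show "lw C w (Wcl cl g \<gamma>) \<in> cells C (cmp C w g) h" using lw_cell[OF S(1) g w] h'h by simp
    show "lw C u (lw C w (Wcl cl g \<gamma>)) = lw C u \<gamma>" using lw_uw(1)[OF S(1) g] S(3) by simp
    show "lw C v (lw C w (Wcl cl g \<gamma>)) = lw C v \<gamma>" using lw_uw(2)[OF S(1) g] S(2) L(4) by simp
  qed
qed

lemma lifts_w: assumes "lifts C f cl" shows "lifts C w (Wcl cl)"
  unfolding lifts_def srw tgw
proof (intro conjI ballI impI)
  show "w \<in> Ar C" using w by (simp add: hom_def)
  fix X g h \<gamma> assume a: "X \<in> Ob C" "g \<in> hom C X AI" "h \<in> hom C X L" "\<gamma> \<in> cells C (cmp C w g) h" "iso2 C \<gamma>"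
  note W = W_props[OF assms a]
  have "c2 C (Wcl cl g \<gamma>) = Wh cl g \<gamma>" using W(2) by (simp add: cells_def)
  then show "c2 C (Wcl cl g \<gamma>) \<in> hom C X AI" "Wcl cl g \<gamma> \<in> cells C g (c2 C (Wcl cl g \<gamma>))"
    "iso2 C (Wcl cl g \<gamma>)" "lw C w (Wcl cl g \<gamma>) = \<gamma>" using W by simp_all
qed

end


context pset begin

definition Fm where "Fm g = (THE m. m \<in> hom C (sr C g) AI \<and> cmp C dm m = g \<and> cmp C cd m = g \<and> rw C \<iota> m = i2 C g)"
definition Fn where "Fn g \<alpha> = (THE n. n \<in> hom C (sr C g) L \<and> cmp C u n = g \<and> cmp C v n = c2 C \<alpha> \<and> rw C lam n = inv2 C \<alpha>)"
definition Fg where "Fg g \<alpha> = (THE \<gamma>. \<gamma> \<in> cells C (cmp C w (Fm g)) (Fn g \<alpha>) \<and> lw C u \<gamma> = i2 C g \<and> lw C v \<gamma> = \<alpha>)"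
definition Fcl where "Fcl cl g \<alpha> = lw C dm (cl (Fm g) (Fg g \<alpha>))"

lemma Fm_props: assumes g: "g \<in> hom C X A"
  shows "Fm g \<in> hom C X AI" "cmp C dm (Fm g) = g" "cmp C cd (Fm g) = g" "rw C \<iota> (Fm g) = i2 C g"
proof -
  have X: "X \<in> Ob C" using g hom_ob by blast
  have ex: "\<exists>!m. m \<in> hom C X AI \<and> cmp C dm m = g \<and> cmp C cd m = g \<and> rw C \<iota> m = i2 C g"
    by (rule IP1[OF X g g i2_cell[OF g] iso2_i2[OF g]])
  show "Fm g \<in> hom C X AI" "cmp C dm (Fm g) = g" "cmp C cd (Fm g) = g" "rw C \<iota> (Fm g) = i2 C g"
    using theI'[OF ex] unfolding Fm_def hom_sr[OF g] by blast+
qed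

lemma Fn_props: assumes g: "g \<in> hom C X A" and h: "h \<in> hom C X B" and a: "\<alpha> \<in> cells C (cmp C f g) h"
  and ai: "iso2 C \<alpha>"
  shows "Fn g \<alpha> \<in> hom C X L" "cmp C u (Fn g \<alpha>) = g" "cmp C v (Fn g \<alpha>) = h" "rw C lam (Fn g \<alpha>) = inv2 C \<alpha>"
proof -
  have X: "X \<in> Ob C" using g hom_ob by blast
  have c2: "c2 C \<alpha> = h" using a by (simp add: cells_def)
  have ex: "\<exists>!n. n \<in> hom C X L \<and> cmp C u n = g \<and> cmp C v n = h \<and> rw C lam n = inv2 C \<alpha>"
    by (rule PL1[OF X g h inv2(1)[OF ai a] iso2_inv2[OF ai a]])
  show "Fn g \<alpha> \<in> hom C X L" "cmp C u (Fn g \<alpha>) = g" "cmp C v (Fn g \<alpha>) = h" "rw C lam (Fn g \<alpha>) = inv2 C \<alpha>"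
    using theI'[OF ex] unfolding Fn_def hom_sr[OF g] c2 by blast+
qed

lemma Fg_props: assumes g: "g \<in> hom C X A" and h: "h \<in> hom C X B" and a: "\<alpha> \<in> cells C (cmp C f g) h"
  and ai: "iso2 C \<alpha>"
  shows "Fg g \<alpha> \<in> cells C (cmp C w (Fm g)) (Fn g \<alpha>)" "lw C u (Fg g \<alpha>) = i2 C g" "lw C v (Fg g \<alpha>) = \<alpha>"
    "iso2 C (Fg g \<alpha>)"
proof -
  have X: "X \<in> Ob C" using g hom_ob by blast
  note M = Fm_props[OF g] and N = Fn_props[OF g h a ai]
  have wm: "cmp C w (Fm g) \<in> hom C X L" using M(1) w by (rule cmp_hom)
  have fg: "cmp C f g \<in> hom C X B" using g f by (rule cmp_hom)
  have c1: "i2 C g \<in> cells C (cmp C u (cmp C w (Fm g))) (cmp C u (Fn g \<alpha>))"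
    using uw_m[OF M(1)] M N i2_cell[OF g] by simp
  have c2: "\<alpha> \<in> cells C (cmp C v (cmp C w (Fm g))) (cmp C v (Fn g \<alpha>))"
    using vw_m[OF M(1)] M N a by simp
  have eq: "vc C (lw C f (i2 C g)) (rw C lam (cmp C w (Fm g))) = vc C (rw C lam (Fn g \<alpha>)) \<alpha>"
    using lam_w_m[OF M(1)] M(4) lw_i2[OF g f] N(4) inv2[OF ai a] vc_i2[OF fg] by simp
  have ex: "\<exists>!\<gamma>. \<gamma> \<in> cells C (cmp C w (Fm g)) (Fn g \<alpha>) \<and> lw C u \<gamma> = i2 C g \<and> lw C v \<gamma> = \<alpha>"
    by (rule PL2[OF X wm N(1) c1 c2 eq])
  show G: "Fg g \<alpha> \<in> cells C (cmp C w (Fm g)) (Fn g \<alpha>)" "lw C u (Fg g \<alpha>) = i2 C g" "lw C v (Fg g \<alpha>) = \<alpha>"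
    using theI'[OF ex] unfolding Fg_def by blast+
  show "iso2 C (Fg g \<alpha>)" using PL_iso[OF G(1) wm] G(2,3) iso2_i2[OF g] ai by simp
qed

lemma lifts_f: assumes l: "lifts C w cl" shows "lifts C f (Fcl cl)"
  unfolding lifts_def srf tgf
proof (intro conjI ballI impI)
  show "f \<in> Ar C" using f by (simp add: hom_def)
  fix X g h \<alpha> assume a: "X \<in> Ob C" "g \<in> hom C X A" "h \<in> hom C X B" "\<alpha> \<in> cells C (cmp C f g) h" "iso2 C \<alpha>"
  note M = Fm_props[OF a(2)] and N = Fn_props[OF a(2-5)] and G = Fg_props[OF a(2-5)]
  define \<sigma> where "\<sigma> = cl (Fm g) (Fg g \<alpha>)"
  have S: "c2 C \<sigma> \<in> hom C X AI" "\<sigma> \<in> cells C (Fm g) (c2 C \<sigma>)" "iso2 C \<sigma>" "lw C w \<sigma> = Fg g \<alpha>"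
    using l a(1) M(1) N(1) G(1,4) unfolding lifts_def srw tgw \<sigma>_def by blast+
  have Fe: "Fcl cl g \<alpha> = lw C dm \<sigma>" unfolding Fcl_def \<sigma>_def ..
  have c: "lw C dm \<sigma> \<in> cells C g (cmp C dm (c2 C \<sigma>))" using lw_cell[OF S(2) M(1) basic(5)] M(2) by simp
  then show "c2 C (Fcl cl g \<alpha>) \<in> hom C X A" "Fcl cl g \<alpha> \<in> cells C g (c2 C (Fcl cl g \<alpha>))"
    using Fe cmp_hom[OF S(1) basic(5)] by (simp_all add: cells_def)
  show "iso2 C (Fcl cl g \<alpha>)" using Fe inv2_lw(1)[OF S(3,2) M(1) basic(5)] by simp
  show "lw C f (Fcl cl g \<alpha>) = \<alpha>" using Fe lw_uw(2)[OF S(2) M(1)] S(4) G(3) by simp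
qed

lemma retract: assumes l: "lifts C f cl" shows "retract_equivalence C w"
proof -
  note lc = basic(11) and li = basic(12)
  note il = inv2[OF li lc]
  define \<tau> where "\<tau> = cl u (inv2 C lam)"
  define u' where "u' = c2 C \<tau>"
  have T: "u' \<in> hom C L A" "\<tau> \<in> cells C u u'" "iso2 C \<tau>" "lw C f \<tau> = inv2 C lam"
    using l basic(4,9,10) il(1) iso2_inv2[OF li lc] unfolding lifts_def srf tgf \<tau>_def u'_def by blast+
  have fu': "cmp C f u' = v" using lw_cell[OF T(2) basic(9) f] T(4) il(1) by (simp add: cells_def)
  note it = inv2[OF T(3,2)]
  have ex: "\<exists>!m. m \<in> hom C L AI \<and> cmp C dm m = u' \<and> cmp C cd m = u \<and> rw C \<iota> m = inv2 C \<tau>"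
    by (rule IP1[OF basic(4) T(1) basic(9) it(1) iso2_inv2[OF T(3,2)]])
  then obtain s where s: "s \<in> hom C L AI" "cmp C dm s = u'" "cmp C cd s = u" "rw C \<iota> s = inv2 C \<tau>" by blast
  have ws: "cmp C w s = i1 C L"
  proof (rule PL_uniq1[OF cmp_hom[OF s(1) w] i1_hom[OF basic(4)]])
    show "cmp C u (cmp C w s) = cmp C u (i1 C L)" using uw_m[OF s(1)] s(3) basic(9) by simp
    show "cmp C v (cmp C w s) = cmp C v (i1 C L)" using vw_m[OF s(1)] s(2) fu' basic(10) by simp
    have "rw C lam (cmp C w s) = lw C f (inv2 C \<tau>)" using lam_w_m[OF s(1)] s(4) by simp
    also have "\<dots> = inv2 C (inv2 C lam)" using inv2_lw(2)[OF T(3,2) basic(9) f] T(4) by simp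
    also have "\<dots> = lam" using inv2_inv2[OF li lc] .
    also have "\<dots> = rw C lam (i1 C L)" using rw_id[OF lc basic(10)] by simp
    finally show "rw C lam (cmp C w s) = rw C lam (i1 C L)" .
  qed
  have sw: "cmp C s w \<in> hom C AI AI" using w s(1) by (rule cmp_hom)
  have i1A: "i1 C AI \<in> hom C AI AI" using basic(3) by (rule i1_hom)
  have dsw: "cmp C dm (cmp C s w) = cmp C u' w" using cmp_assoc[OF w s(1) basic(5)] s(2) by simp
  have csw: "cmp C cd (cmp C s w) = cd" using cmp_assoc[OF w s(1) basic(6)] s(3) uw by simp
  have u'w: "cmp C u' w \<in> hom C AI A" using w T(1) by (rule cmp_hom)
  have tw: "rw C \<tau> w \<in> cells C cd (cmp C u' w)" using rw_cell[OF T(2) basic(9) w] uw by simp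
  have twi: "iso2 C (rw C \<tau> w)" using inv2_rw(1)[OF T(3,2) basic(9) w] .
  define sd where "sd = vc C (rw C \<tau> w) \<iota>"
  have sdc: "sd \<in> cells C (cmp C dm (i1 C AI)) (cmp C dm (cmp C s w))"
    unfolding sd_def using vc_cell[OF basic(7) tw] dsw basic(5) by simp
  have scc: "i2 C cd \<in> cells C (cmp C cd (i1 C AI)) (cmp C cd (cmp C s w))"
    using i2_cell[OF basic(6)] csw basic(6) by simp
  have compat: "vc C (rw C \<iota> (cmp C s w)) sd = vc C (i2 C cd) (rw C \<iota> (i1 C AI))"
  proof -
    have "rw C \<iota> (cmp C s w) = inv2 C (rw C \<tau> w)"
      using rw_rw[OF basic(7) w s(1) basic(5)] s(4) inv2_rw(2)[OF T(3,2) basic(9) w] by simp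
    then have "vc C (rw C \<iota> (cmp C s w)) sd = \<iota>"
      unfolding sd_def using vc_cancel_l[OF twi tw basic(7)] by simp
    then show ?thesis using rw_id[OF basic(7,5)] basic(7) by simp
  qed
  obtain \<eta> where e: "\<eta> \<in> cells C (i1 C AI) (cmp C s w)" "lw C dm \<eta> = sd" "lw C cd \<eta> = i2 C cd"
    using IP2[OF basic(3) i1A sw sdc scc compat] by blast
  have ei: "iso2 C \<eta>"
  proof (rule IP_iso[OF e(1) i1A])
    show "iso2 C (lw C dm \<eta>)" unfolding e(2) sd_def by (rule iso2_vc(1)[OF basic(8,7) twi tw])
    show "iso2 C (lw C cd \<eta>)" unfolding e(3) by (rule iso2_i2[OF basic(6)])
  qed
  have ec: "i2 C (cmp C w s) \<in> cells C (cmp C w s) (i1 C L)" using ws i2_cell[OF i1_hom[OF basic(4)]] by simp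
  have eci: "iso2 C (i2 C (cmp C w s))" using ws iso2_i2[OF i1_hom[OF basic(4)]] by simp
  have wA: "w \<in> Ar C" using w by (simp add: hom_def)
  have "equivalence C w" unfolding equivalence_def srw tgw
    using wA s(1) e(1) ei ec eci by blast
  then show ?thesis unfolding retract_equivalence_def srw tgw using s(1) ws by blast
qed

end


context pset begin

lemma cleavage_nat: assumes "cleavage C f' cl" "X \<in> Ob C" "g \<in> hom C X (sr C f')" "h \<in> hom C X (tg C f')"
  "\<alpha> \<in> cells C (cmp C f' g) h" "iso2 C \<alpha>" "Y \<in> Ob C" "k \<in> hom C Y X"
  shows "cl (cmp C g k) (rw C \<alpha> k) = rw C (cl g \<alpha>) k"
  using assms unfolding cleavage_def by blast

lemma W_nat: assumes cl: "cleavage C f cl" and X: "X \<in> Ob C" and g: "g \<in> hom C X AI" and h: "h \<in> hom C X L"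
    and ga: "\<gamma> \<in> cells C (cmp C w g) h" and gi: "iso2 C \<gamma>" and Y: "Y \<in> Ob C" and k: "k \<in> hom C Y X"
  shows "Wcl cl (cmp C g k) (rw C \<gamma> k) = rw C (Wcl cl g \<gamma>) k"
proof -
  have l: "lifts C f cl" using cl by (rule cleavage_lifts)
  have gk: "cmp C g k \<in> hom C Y AI" using k g by (rule cmp_hom)
  have hk: "cmp C h k \<in> hom C Y L" using k h by (rule cmp_hom)
  have wg: "cmp C w g \<in> hom C X L" using g w by (rule cmp_hom)
  have gka: "rw C \<gamma> k \<in> cells C (cmp C w (cmp C g k)) (cmp C h k)"
    using rw_cell[OF ga wg k] cmp_assoc[OF k g w] by simp
  have gki: "iso2 C (rw C \<gamma> k)" using inv2_rw(1)[OF gi ga wg k] .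
  note W1 = W_props[OF l X g h ga gi] and W2 = W_props[OF l Y gk hk gka gki]
  have dg: "cmp C dm g \<in> hom C X A" using g basic(5) by (rule cmp_hom)
  have vh: "cmp C v h \<in> hom C X B" using h basic(10) by (rule cmp_hom)
  have gv: "lw C v \<gamma> \<in> cells C (cmp C f (cmp C dm g)) (cmp C v h)"
    using lw_cell[OF ga wg basic(10)] vw_m[OF g] by simp
  have gu: "lw C u \<gamma> \<in> cells C (cmp C cd g) (cmp C u h)"
    using lw_cell[OF ga wg basic(9)] uw_m[OF g] by simp
  have gvi: "iso2 C (lw C v \<gamma>)" using inv2_lw(1)[OF gi ga wg basic(10)] .
  have gui: "iso2 C (lw C u \<gamma>)" using inv2_lw(1)[OF gi ga wg basic(9)] .
  have Wdk: "Wd cl (cmp C g k) (rw C \<gamma> k) = rw C (Wd cl g \<gamma>) k"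
  proof -
    have "Wd cl (cmp C g k) (rw C \<gamma> k) = cl (cmp C (cmp C dm g) k) (rw C (lw C v \<gamma>) k)"
      unfolding Wd_def using cmp_assoc[OF k g basic(5)] lw_rw[OF ga k wg basic(10)] by simp
    also have "\<dots> = rw C (Wd cl g \<gamma>) k" unfolding Wd_def
      by (rule cleavage_nat[OF cl X _ _ _ gvi Y k]) (use dg vh gv in \<open>simp_all add: srf tgf\<close>)
    finally show ?thesis .
  qed
  define \<sigma> where "\<sigma> = Wcl cl g \<gamma>"
  define h' where "h' = Wh cl g \<gamma>"
  have h': "h' \<in> hom C X AI" using W1(1) h'_def by simp
  have s: "\<sigma> \<in> cells C g h'" using W1(2) \<sigma>_def h'_def by simp
  have sdc: "Wd cl g \<gamma> \<in> cells C (cmp C dm g) (cmp C dm h')"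
    using lw_cell[OF s g basic(5)] W1(8) \<sigma>_def by simp
  have sdi: "iso2 C (Wd cl g \<gamma>)" using inv2_lw(1)[OF W1(3,2) g basic(5)] W1(8) by simp
  have Whk: "Wh cl (cmp C g k) (rw C \<gamma> k) = cmp C h' k"
  proof (rule IP_uniq1[OF W2(1) cmp_hom[OF k h']])
    show "cmp C dm (Wh cl (cmp C g k) (rw C \<gamma> k)) = cmp C dm (cmp C h' k)"
      using W2(5) Wdk rw_cell[OF sdc dg k] cmp_assoc[OF k h' basic(5)] by (simp add: cells_def)
    have "c2 C (lw C u (rw C \<gamma> k)) = cmp C (cmp C u h) k"
      using lw_rw[OF ga k wg basic(9)] rw_cell[OF gu cmp_hom[OF g basic(6)] k] by (simp add: cells_def)
    then show "cmp C cd (Wh cl (cmp C g k) (rw C \<gamma> k)) = cmp C cd (cmp C h' k)"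
      using W2(6) W1(6) h'_def gu cmp_assoc[OF k h' basic(6)] by (simp add: cells_def)
    have "Wa cl (cmp C g k) (rw C \<gamma> k) = rw C (Wa cl g \<gamma>) k"
    proof -
      have "Wa cl (cmp C g k) (rw C \<gamma> k) = vc C (rw C (lw C u \<gamma>) k) (vc C (rw C (rw C \<iota> g) k) (rw C (inv2 C (Wd cl g \<gamma>)) k))"
        unfolding Wa_def Wdk using lw_rw[OF ga k wg basic(9)] rw_rw[OF basic(7) k g basic(5)]
          inv2_rw(2)[OF sdi sdc dg k] by simp
      also have "\<dots> = rw C (Wa cl g \<gamma>) k" unfolding Wa_def
        using rw_vc[OF inv2(1)[OF sdi sdc] iota_m(1)[OF g] cmp_hom[OF h' basic(5)] k]
          rw_vc[OF vc_cell[OF inv2(1)[OF sdi sdc] iota_m(1)[OF g]] gu cmp_hom[OF h' basic(5)] k] by simp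
      finally show ?thesis .
    qed
    then show "rw C \<iota> (Wh cl (cmp C g k) (rw C \<gamma> k)) = rw C \<iota> (cmp C h' k)"
      using W2(7) W1(7) h'_def rw_rw[OF basic(7) k h' basic(5)] by simp
  qed
  show ?thesis
  proof (rule IP_uniq2[OF _ _ gk])
    show "Wcl cl (cmp C g k) (rw C \<gamma> k) \<in> cells C (cmp C g k) (cmp C h' k)" using W2(2) Whk by simp
    show "rw C (Wcl cl g \<gamma>) k \<in> cells C (cmp C g k) (cmp C h' k)" using rw_cell[OF s g k] \<sigma>_def by simp
    show "lw C dm (Wcl cl (cmp C g k) (rw C \<gamma> k)) = lw C dm (rw C (Wcl cl g \<gamma>) k)"
      using W2(8) Wdk lw_rw[OF s k g basic(5)] W1(8) \<sigma>_def by simp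
    show "lw C cd (Wcl cl (cmp C g k) (rw C \<gamma> k)) = lw C cd (rw C (Wcl cl g \<gamma>) k)"
      using W2(9) lw_rw[OF s k g basic(6)] W1(9) \<sigma>_def lw_rw[OF ga k wg basic(9)] by simp
  qed
qed

lemma W_normal: assumes cl: "normal_cleavage C f cl" and g: "g \<in> hom C X AI"
  shows "Wcl cl g (i2 C (cmp C w g)) = i2 C g"
proof -
  have X: "X \<in> Ob C" using g hom_ob by blast
  have l: "lifts C f cl" using cl unfolding normal_cleavage_def by (blast intro: cleavage_lifts)
  have wg: "cmp C w g \<in> hom C X L" using g w by (rule cmp_hom)
  have dg: "cmp C dm g \<in> hom C X A" using g basic(5) by (rule cmp_hom)
  have cg: "cmp C cd g \<in> hom C X A" using g basic(6) by (rule cmp_hom)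
  note W = W_props[OF l X g wg i2_cell[OF wg] iso2_i2[OF wg]]
  have Wd: "Wd cl g (i2 C (cmp C w g)) = i2 C (cmp C dm g)"
    unfolding Wd_def using lw_i2[OF wg basic(10)] vw_m[OF g] cl dg X
    unfolding normal_cleavage_def srf by simp
  have lu: "lw C u (i2 C (cmp C w g)) = i2 C (cmp C cd g)" using lw_i2[OF wg basic(9)] uw_m[OF g] by simp
  have Wh: "Wh cl g (i2 C (cmp C w g)) = g"
  proof (rule IP_uniq1[OF W(1) g])
    show "cmp C dm (Wh cl g (i2 C (cmp C w g))) = cmp C dm g" using W(5) Wd i2_cell[OF dg] by (simp add: cells_def)
    show "cmp C cd (Wh cl g (i2 C (cmp C w g))) = cmp C cd g" using W(6) lu i2_cell[OF cg] by (simp add: cells_def)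
    show "rw C \<iota> (Wh cl g (i2 C (cmp C w g))) = rw C \<iota> g"
      using W(7) unfolding Wa_def Wd lu inv2_i2[OF dg] using iota_m(1)[OF g] by simp
  qed
  show ?thesis
  proof (rule IP_uniq2[OF _ i2_cell[OF g] g])
    show "Wcl cl g (i2 C (cmp C w g)) \<in> cells C g g" using W(2) Wh by simp
    show "lw C dm (Wcl cl g (i2 C (cmp C w g))) = lw C dm (i2 C g)" using W(8) Wd lw_i2[OF g basic(5)] by simp
    show "lw C cd (Wcl cl g (i2 C (cmp C w g))) = lw C cd (i2 C g)" using W(9) lu lw_i2[OF g basic(6)] by simp
  qed
qed

lemma F_nat: assumes cl: "cleavage C w cl" and X: "X \<in> Ob C" and g: "g \<in> hom C X A" and h: "h \<in> hom C X B"
    and a: "\<alpha> \<in> cells C (cmp C f g) h" and ai: "iso2 C \<alpha>" and Y: "Y \<in> Ob C" and k: "k \<in> hom C Y X"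
  shows "Fcl cl (cmp C g k) (rw C \<alpha> k) = rw C (Fcl cl g \<alpha>) k"
proof -
  have gk: "cmp C g k \<in> hom C Y A" using k g by (rule cmp_hom)
  have hk: "cmp C h k \<in> hom C Y B" using k h by (rule cmp_hom)
  have fg: "cmp C f g \<in> hom C X B" using g f by (rule cmp_hom)
  have ak: "rw C \<alpha> k \<in> cells C (cmp C f (cmp C g k)) (cmp C h k)"
    using rw_cell[OF a fg k] cmp_assoc[OF k g f] by simp
  have aki: "iso2 C (rw C \<alpha> k)" using inv2_rw(1)[OF ai a fg k] .
  note M = Fm_props[OF g] and N = Fn_props[OF g h a ai] and G = Fg_props[OF g h a ai]
  note M2 = Fm_props[OF gk] and N2 = Fn_props[OF gk hk ak aki] and G2 = Fg_props[OF gk hk ak aki]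
  have Mk: "Fm (cmp C g k) = cmp C (Fm g) k"
  proof (rule IP_uniq1[OF M2(1) cmp_hom[OF k M(1)]])
    show "cmp C dm (Fm (cmp C g k)) = cmp C dm (cmp C (Fm g) k)" using M2(2) M(2) cmp_assoc[OF k M(1) basic(5)] by simp
    show "cmp C cd (Fm (cmp C g k)) = cmp C cd (cmp C (Fm g) k)" using M2(3) M(3) cmp_assoc[OF k M(1) basic(6)] by simp
    show "rw C \<iota> (Fm (cmp C g k)) = rw C \<iota> (cmp C (Fm g) k)"
      using M2(4) M(4) rw_rw[OF basic(7) k M(1) basic(5)] rw_i2[OF k g] by simp
  qed
  have Nk: "Fn (cmp C g k) (rw C \<alpha> k) = cmp C (Fn g \<alpha>) k"
  proof (rule PL_uniq1[OF N2(1) cmp_hom[OF k N(1)]])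
    show "cmp C u (Fn (cmp C g k) (rw C \<alpha> k)) = cmp C u (cmp C (Fn g \<alpha>) k)" using N2(2) N(2) cmp_assoc[OF k N(1) basic(9)] by simp
    show "cmp C v (Fn (cmp C g k) (rw C \<alpha> k)) = cmp C v (cmp C (Fn g \<alpha>) k)" using N2(3) N(3) cmp_assoc[OF k N(1) basic(10)] by simp
    show "rw C lam (Fn (cmp C g k) (rw C \<alpha> k)) = rw C lam (cmp C (Fn g \<alpha>) k)"
      using N2(4) N(4) rw_rw[OF basic(11) k N(1) basic(10)] inv2_rw(2)[OF ai a fg k] by simp
  qed
  have wm: "cmp C w (Fm g) \<in> hom C X L" using M(1) w by (rule cmp_hom)
  have Gk: "Fg (cmp C g k) (rw C \<alpha> k) = rw C (Fg g \<alpha>) k"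
  proof (rule PL_uniq2[OF G2(1) _ cmp_hom[OF M2(1) w]])
    show "rw C (Fg g \<alpha>) k \<in> cells C (cmp C w (Fm (cmp C g k))) (Fn (cmp C g k) (rw C \<alpha> k))"
      using rw_cell[OF G(1) wm k] Mk Nk cmp_assoc[OF k M(1) w] by simp
    show "lw C u (Fg (cmp C g k) (rw C \<alpha> k)) = lw C u (rw C (Fg g \<alpha>) k)"
      using G2(2) lw_rw[OF G(1) k wm basic(9)] G(2) rw_i2[OF k g] by simp
    show "lw C v (Fg (cmp C g k) (rw C \<alpha> k)) = lw C v (rw C (Fg g \<alpha>) k)"
      using G2(3) lw_rw[OF G(1) k wm basic(10)] G(3) by simp
  qed
  have "cl (cmp C (Fm g) k) (rw C (Fg g \<alpha>) k) = rw C (cl (Fm g) (Fg g \<alpha>)) k"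
    by (rule cleavage_nat[OF cl X _ _ _ G(4) Y k]) (use M(1) N(1) G(1) in \<open>simp_all add: srw tgw\<close>)
  moreover have "cl (Fm g) (Fg g \<alpha>) \<in> cells C (Fm g) (c2 C (cl (Fm g) (Fg g \<alpha>)))"
    using cleavage_lifts[OF cl] X M(1) N(1) G(1,4) unfolding lifts_def srw tgw by blast
  ultimately show ?thesis unfolding Fcl_def Mk Gk
    using lw_rw[OF _ k M(1) basic(5)] by simp
qed

lemma F_normal: assumes cl: "normal_cleavage C w cl" and g: "g \<in> hom C X A"
  shows "Fcl cl g (i2 C (cmp C f g)) = i2 C g"
proof -
  have X: "X \<in> Ob C" using g hom_ob by blast
  have fg: "cmp C f g \<in> hom C X B" using g f by (rule cmp_hom)
  note M = Fm_props[OF g]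
  have wm: "cmp C w (Fm g) \<in> hom C X L" using M(1) w by (rule cmp_hom)
  note N = Fn_props[OF g fg i2_cell[OF fg] iso2_i2[OF fg]] and G = Fg_props[OF g fg i2_cell[OF fg] iso2_i2[OF fg]]
  have Nw: "Fn g (i2 C (cmp C f g)) = cmp C w (Fm g)"
  proof (rule PL_uniq1[OF N(1) wm])
    show "cmp C u (Fn g (i2 C (cmp C f g))) = cmp C u (cmp C w (Fm g))" using N(2) uw_m[OF M(1)] M(3) by simp
    show "cmp C v (Fn g (i2 C (cmp C f g))) = cmp C v (cmp C w (Fm g))" using N(3) vw_m[OF M(1)] M(2) by simp
    show "rw C lam (Fn g (i2 C (cmp C f g))) = rw C lam (cmp C w (Fm g))"
      using N(4) inv2_i2[OF fg] lam_w_m[OF M(1)] M(4) lw_i2[OF g f] by simp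
  qed
  have Gw: "Fg g (i2 C (cmp C f g)) = i2 C (cmp C w (Fm g))"
  proof (rule PL_uniq2[OF G(1) _ wm])
    show "i2 C (cmp C w (Fm g)) \<in> cells C (cmp C w (Fm g)) (Fn g (i2 C (cmp C f g)))" using Nw i2_cell[OF wm] by simp
    show "lw C u (Fg g (i2 C (cmp C f g))) = lw C u (i2 C (cmp C w (Fm g)))"
      using G(2) lw_i2[OF wm basic(9)] uw_m[OF M(1)] M(3) by simp
    show "lw C v (Fg g (i2 C (cmp C f g))) = lw C v (i2 C (cmp C w (Fm g)))"
      using G(3) lw_i2[OF wm basic(10)] vw_m[OF M(1)] M(2) by simp
  qed
  have "cl (Fm g) (i2 C (cmp C w (Fm g))) = i2 C (Fm g)"
    using cl X M(1) unfolding normal_cleavage_def srw by blast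
  then show ?thesis unfolding Fcl_def Gw using lw_i2[OF M(1) basic(5)] M(2) by simp
qed

lemma cleavage_w: assumes cl: "cleavage C f cl" shows "cleavage C w (Wcl cl)"
proof -
  have l: "lifts C w (Wcl cl)" using lifts_w[OF cleavage_lifts[OF cl]] .
  show ?thesis unfolding cleavage_def
  proof (intro conjI ballI impI)
    show "w \<in> Ar C" using w by (simp add: hom_def)
    fix X g h \<gamma> assume a: "X \<in> Ob C" "g \<in> hom C X (sr C w)" "h \<in> hom C X (tg C w)" "\<gamma> \<in> cells C (cmp C w g) h" "iso2 C \<gamma>"
    show "c2 C (Wcl cl g \<gamma>) \<in> hom C X (sr C w)" "Wcl cl g \<gamma> \<in> cells C g (c2 C (Wcl cl g \<gamma>))"
      "iso2 C (Wcl cl g \<gamma>)" "lw C w (Wcl cl g \<gamma>) = \<gamma>"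
      using l a unfolding lifts_def by blast+
    fix Y k assume "Y \<in> Ob C" "k \<in> hom C Y X"
    then show "Wcl cl (cmp C g k) (rw C \<gamma> k) = rw C (Wcl cl g \<gamma>) k"
      using W_nat[OF cl a(1) _ _ a(4,5)] a(2,3) unfolding srw tgw by blast
  qed
qed

lemma cleavage_f: assumes cl: "cleavage C w cl" shows "cleavage C f (Fcl cl)"
proof -
  have l: "lifts C f (Fcl cl)" using lifts_f[OF cleavage_lifts[OF cl]] .
  show ?thesis unfolding cleavage_def
  proof (intro conjI ballI impI)
    show "f \<in> Ar C" using f by (simp add: hom_def)
    fix X g h \<alpha> assume a: "X \<in> Ob C" "g \<in> hom C X (sr C f)" "h \<in> hom C X (tg C f)" "\<alpha> \<in> cells C (cmp C f g) h" "iso2 C \<alpha>"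
    show "c2 C (Fcl cl g \<alpha>) \<in> hom C X (sr C f)" "Fcl cl g \<alpha> \<in> cells C g (c2 C (Fcl cl g \<alpha>))"
      "iso2 C (Fcl cl g \<alpha>)" "lw C f (Fcl cl g \<alpha>) = \<alpha>"
      using l a unfolding lifts_def by blast+
    fix Y k assume "Y \<in> Ob C" "k \<in> hom C Y X"
    then show "Fcl cl (cmp C g k) (rw C \<alpha> k) = rw C (Fcl cl g \<alpha>) k"
      using F_nat[OF cl a(1) _ _ a(4,5)] a(2,3) unfolding srf tgf by blast
  qed
qed

theorem main:
  shows "(rep_isofib C f \<longleftrightarrow> rep_isofib C w)
       \<and> (normal_isofib C f \<longleftrightarrow> normal_isofib C w)
       \<and> (rep_isofib C f \<longrightarrow> retract_equivalence C w)"
proof -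
  have R: "rep_isofib C f \<longleftrightarrow> rep_isofib C w"
    unfolding rep_isofib_lifts using lifts_w lifts_f by blast
  have N1: "normal_isofib C w" if nf: "normal_isofib C f"
  proof -
    obtain cl where cl: "normal_cleavage C f cl" using nf unfolding normal_isofib_def by blast
    have "normal_cleavage C w (Wcl cl)" unfolding normal_cleavage_def
      using cleavage_w cl W_normal unfolding normal_cleavage_def srw by blast
    then show ?thesis using nf R unfolding normal_isofib_def by blast
  qed
  have N2: "normal_isofib C f" if nf: "normal_isofib C w"
  proof -
    obtain cl where cl: "normal_cleavage C w cl" using nf unfolding normal_isofib_def by blast
    have "normal_cleavage C f (Fcl cl)" unfolding normal_cleavage_def
      using cleavage_f cl F_normal unfolding normal_cleavage_def srf by blast
    then show ?thesis using nf R unfolding normal_isofib_def by blast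
  qed
  have E: "rep_isofib C f \<longrightarrow> retract_equivalence C w"
    unfolding rep_isofib_lifts using retract by blast
  show ?thesis using R N1 N2 E by blast
qed

end

theorem proposition3p9:
  fixes C :: "('o, 'm, 'c) twocat"
  assumes "two_category C"
    and "has_pseudolimits_of_arrows C"
    and "has_iso_powers C"
    and "f \<in> hom C A B"
    and "iso_power C A AI dm cd \<iota>"
    and "pseudolimit C f L u v lam"
    and "w \<in> hom C AI L"
    and "cmp C u w = cd"
    and "cmp C v w = cmp C f dm"
    and "rw C lam w = lw C f \<iota>"
  shows "(rep_isofib C f \<longleftrightarrow> rep_isofib C w)
       \<and> (normal_isofib C f \<longleftrightarrow> normal_isofib C w)
       \<and> (rep_isofib C f \<longrightarrow> retract_equivalence C w)"
proof -
  interpret pset C f A B AI dm cd \<iota> L u v lam w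
    by (unfold_locales; (rule assms)?)
  show ?thesis by (rule main)
qed

end
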